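(* Consider the dimensionless Maxwell's equations in free space, $\partial_t\mathbf{E}=\nabla\times\mathbf{H}$, $\partial_t\mathbf{H}=-\nabla\times\mathbf{E}$, in their one-dimensional form ($\partial_t E=\partial_x H$, $\partial_t H=\partial_x E$), two-dimensional $\mathrm{TM}_z$ form ($\partial_t H_x=-\partial_y E_z$, $\partial_t H_y=\partial_x E_z$, $\partial_t E_z=\partial_x H_y-\partial_y H_x$), or three-dimensional form, on the unit cube with periodic boundary conditions, discretized on a uniform rectangular grid with spacings $\Delta x$ (and $\Delta y$, $\Delta z$) and time step $\Delta t$. The BFECC scheme based on the central difference scheme is second order accurate. It is stable in the $l^2$ sense if (1) in the one-dimensional case, $\Delta t\le\sqrt3\,\Delta x$; or (2) in the two-dimensional case, $\Delta t\le \dfrac{\sqrt3}{\sqrt{(1/\Delta x)^2+(1/\Delta y)^2}}$; or (3) in the three-dimensional case, $\Delta t\le \dfrac{\sqrt3}{\sqrt{(1/\Delta x)^2+(1/\Delta y)^2+(1/\Delta z)^2}}$.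
   Context: Write the system as $\partial_t\mathbf{u}=\sum_{m}A_m\partial_{x_m}\mathbf{u}$ with constant matrices $A_m$. The central difference scheme is $\mathbf{U}^{n+1}_{\mathbf{j}}=\mathbf{U}^n_{\mathbf{j}}+\sum_m\frac{\Delta t}{2\Delta x_m}A_m(\mathbf{U}^n_{\mathbf{j}+\mathbf{e}_m}-\mathbf{U}^n_{\mathbf{j}-\mathbf{e}_m})$ (e.g. in 1D: $E^{n+1}_j=E^n_j+\frac{\lambda}{2}(H^n_{j+1}-H^n_{j-1})$, $H^{n+1}_j=H^n_j+\frac\lambda2(E^n_{j+1}-E^n_{j-1})$, $\lambda=\Delta t/\Delta x$). Given a linear scheme $\mathcal{L}$, its backward scheme $\mathcal{L}^*$ is $\mathcal{L}$ applied to the time-reversed system (for Maxwell, equivalently $\Delta t\to-\Delta t$ in the scheme), and the BFECC scheme based on $\mathcal{L}$ performs $\tilde{\mathbf{U}}^{n+1}=\mathcal{L}\mathbf{U}^n$, $\tilde{\mathbf{U}}^n=\mathcal{L}^*\tilde{\mathbf{U}}^{n+1}$, $\mathbf{U}^{n+1}=\mathcal{L}(\mathbf{U}^n+\tfrac12(\mathbf{U}^n-\tilde{\mathbf{U}}^n))$. Accuracy order is in the Fourier sense: with equal mesh sizes $h$ and $\Delta t/h$ fixed, a scheme with Fourier symbol matrix $Q(\mathbf{k})$ is $r$-th order accurate iff $Q(\mathbf{k})=e^{\Delta t P(i\mathbf{k})}+O(|\mathbf{k}h|^{r+1})$ as $h\to0$, where $P(i\mathbf{k})=2\pi i\sum_m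 k_mA_m$ is the symbol of the exact evolution. *)

theory Defs
  imports "HOL-Analysis.Analysis"
begin

text \<open>General constant-coefficient system  u_t = sum_m A_m u_{x_m}  with state
  in complex^'s and spatial dimension given by the finite type 'd.
  Grid functions are defined on the integer lattice int^'d.\<close>

type_synonym ('d, 's) gridfun = "int^'d::finite \<Rightarrow> complex^'s::finite"

definition cmat_scale :: "complex \<Rightarrow> complex^'s::finite^'s \<Rightarrow> complex^'s^'s" where
  "cmat_scale c M = (\<chi> a b. c * M$a$b)"

definition cvec_scale :: "complex \<Rightarrow> complex^'s::finite \<Rightarrow> complex^'s" where
  "cvec_scale c v = (\<chi> a. c * v$a)"

definition mpow :: "complex^'s::finite^'s \<Rightarrow> nat \<Rightarrow> complex^'s^'s" where
  "mpow M n = (((**) M) ^^ n) (mat 1)"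

definition mexp :: "complex^'s::finite^'s \<Rightarrow> complex^'s^'s" where
  "mexp M = (\<Sum>n. (1 / fact n) *\<^sub>R mpow M n)"

definition central ::
  "('d::finite \<Rightarrow> complex^'s^'s) \<Rightarrow> real \<Rightarrow> ('d \<Rightarrow> real) \<Rightarrow> ('d,'s) gridfun \<Rightarrow> ('d,'s) gridfun" where
  "central A dt dx U = (\<lambda>j. U j + (\<Sum>m\<in>UNIV. (dt / (2 * dx m)) *\<^sub>R
        (A m *v (U (j + axis m 1) - U (j - axis m 1)))))"

definition central_backward ::
  "('d::finite \<Rightarrow> complex^'s^'s) \<Rightarrow> real \<Rightarrow> ('d \<Rightarrow> real) \<Rightarrow> ('d,'s) gridfun \<Rightarrow> ('d,'s) gridfun" where
  "central_backward A dt dx = central (\<lambda>m. - A m) dt dx"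

definition bfecc ::
  "('d::finite \<Rightarrow> complex^'s^'s) \<Rightarrow> real \<Rightarrow> ('d \<Rightarrow> real) \<Rightarrow> ('d,'s) gridfun \<Rightarrow> ('d,'s) gridfun" where
  "bfecc A dt dx U =
     (let Ut1 = central A dt dx U;
          Ut0 = central_backward A dt dx Ut1
      in central A dt dx (\<lambda>j. U j + (1/2) *\<^sub>R (U j - Ut0 j)))"

definition exact_symbol :: "('d::finite \<Rightarrow> complex^'s^'s) \<Rightarrow> real^'d \<Rightarrow> complex^'s^'s" where
  "exact_symbol A k = cmat_scale (2 * pi * \<i>) (\<Sum>m\<in>UNIV. k$m *\<^sub>R A m)"

definition plane_wave :: "real \<Rightarrow> real^'d::finite \<Rightarrow> complex^'s \<Rightarrow> ('d,'s) gridfun" where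
  "plane_wave h k v = (\<lambda>j. cvec_scale (exp (2 * pi * \<i> * of_real (\<Sum>m\<in>UNIV. k$m * h * of_int (j$m)))) v)"

text \<open>Accuracy of order r in the Fourier sense: with equal mesh sizes h and
  dt/h = nu fixed, the Fourier symbol Q(k) (the matrix by which the scheme
  multiplies a plane wave with wave vector k) satisfies
  Q(k) = exp(dt P(ik)) + O(|k h|^(r+1)) as h -> 0.  Q(k) v is the value at
  the grid point 0 of the scheme applied to the plane wave with amplitude v.\<close>
definition fourier_accurate ::
  "nat \<Rightarrow> (('d::finite \<Rightarrow> complex^'s^'s) \<Rightarrow> real \<Rightarrow> ('d \<Rightarrow> real) \<Rightarrow> ('d,'s) gridfun \<Rightarrow> ('d,'s) gridfun)
      \<Rightarrow> ('d \<Rightarrow> complex^'s^'s) \<Rightarrow> bool" where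
  "fourier_accurate r S A \<longleftrightarrow>
     (\<forall>\<nu>>0. \<exists>C \<delta>. \<delta> > 0 \<and>
        (\<forall>h k v. h > 0 \<longrightarrow> norm (h *\<^sub>R k) \<le> \<delta> \<longrightarrow>
           norm (S A (\<nu> * h) (\<lambda>m. h) (plane_wave h k v) 0
                 - mexp (cmat_scale (of_real (\<nu> * h)) (exact_symbol A k)) *v v)
             \<le> C * norm (h *\<^sub>R k) ^ (r + 1) * norm v))"

text \<open>Periodic grid on the unit cube: N$m points in direction m, spacing 1/N$m.\<close>
definition mesh :: "nat^'d::finite \<Rightarrow> 'd \<Rightarrow> real" where
  "mesh N m = 1 / real (N$m)"

definition periodic :: "nat^'d::finite \<Rightarrow> ('d,'s::finite) gridfun \<Rightarrow> bool" where
  "periodic N U \<longleftrightarrow> (\<forall>j m. U (j + axis m (int (N$m))) = U j)"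

definition cell_box :: "nat^'d::finite \<Rightarrow> (int^'d) set" where
  "cell_box N = {j. \<forall>m. 0 \<le> j$m \<and> j$m < int (N$m)}"

definition l2norm :: "nat^'d::finite \<Rightarrow> ('d,'s::finite) gridfun \<Rightarrow> real" where
  "l2norm N U = sqrt ((\<Prod>m\<in>UNIV. mesh N m) * (\<Sum>j\<in>cell_box N. (norm (U j))\<^sup>2))"

text \<open>Stability in the l^2 sense (Lax--Richtmyer / Strikwerda, one-step scheme)
  in a stability region Lambda of (grid, time step) pairs: for every T > 0 there
  is C such that ||U^n|| <= C ||U^0|| whenever 0 <= n dt <= T.\<close>
definition l2_stable ::
  "(('d::finite \<Rightarrow> complex^'s^'s) \<Rightarrow> real \<Rightarrow> ('d \<Rightarrow> real) \<Rightarrow> ('d,'s) gridfun \<Rightarrow> ('d,'s) gridfun)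
      \<Rightarrow> ('d \<Rightarrow> complex^'s^'s) \<Rightarrow> ((nat^'d) \<times> real) set \<Rightarrow> bool" where
  "l2_stable S A \<Lambda> \<longleftrightarrow>
     (\<forall>T>0. \<exists>C. \<forall>N dt n U. (N, dt) \<in> \<Lambda> \<longrightarrow> periodic N U \<longrightarrow> real n * dt \<le> T \<longrightarrow>
         l2norm N ((S A dt (mesh N) ^^ n) U) \<le> C * l2norm N U)"

text \<open>Maxwell systems.  1D: state (E, H) = components (0, 1);
  E_t = H_x, H_t = E_x.\<close>
definition maxwell1 :: "1 \<Rightarrow> complex^2^2" where
  "maxwell1 m = (\<chi> a b. if a \<noteq> b then 1 else 0)"

text \<open>2D TM_z: state (H_x, H_y, E_z) = components (0, 1, 2); directions x = 0, y = 1.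
  (H_x)_t = -(E_z)_y, (H_y)_t = (E_z)_x, (E_z)_t = (H_y)_x - (H_x)_y.\<close>
definition maxwell2 :: "2 \<Rightarrow> complex^3^3" where
  "maxwell2 m = (\<chi> a b.
     if m = 0 then (if (a = 1 \<and> b = 2) \<or> (a = 2 \<and> b = 1) then 1 else 0)
     else (if (a = 0 \<and> b = 2) \<or> (a = 2 \<and> b = 0) then -1 else 0))"

definition levi_civita :: "3 \<Rightarrow> 3 \<Rightarrow> 3 \<Rightarrow> complex" where
  "levi_civita a b c =
     (if (a, b, c) \<in> {(0,1,2), (1,2,0), (2,0,1)} then 1
      else if (a, b, c) \<in> {(0,2,1), (2,1,0), (1,0,2)} then -1 else 0)"

text \<open>3D: state component (0, a) = E_a, (1, a) = H_a; directions 0, 1, 2.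
  E_t = curl H, H_t = - curl E, with (curl F)_a = sum_{m,b} eps_{a m b} d_m F_b.\<close>
definition maxwell3 :: "3 \<Rightarrow> complex^(2 \<times> 3)^(2 \<times> 3)" where
  "maxwell3 m = (\<chi> i j.
     if fst i = 0 \<and> fst j = 1 then levi_civita (snd i) m (snd j)
     else if fst i = 1 \<and> fst j = 0 then - levi_civita (snd i) m (snd j) else 0)"

end

theory Submission
  imports Defs
begin

definition per :: "nat^'d::finite \<Rightarrow> (int^'d \<Rightarrow> 'a) \<Rightarrow> bool" where
  "per N f \<longleftrightarrow> (\<forall>j m. f (j + axis m (int (N$m))) = f j)"

lemma axis_add: "axis m (a + b) = axis m a + (axis m b :: 'b::comm_monoid_add^'d::finite)"
  by (simp add: vec_eq_iff axis_def)

lemma per_mult: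
  fixes N :: "nat^'d::finite"
  assumes "per N f" shows "f (j + axis m (t * int (N$m))) = f j"
proof (induction t arbitrary: j rule: int_induct[where k=0])
  case base
  show ?case by (simp add: axis_def zero_vec_def[symmetric])
next
  case (step1 i)
  have "f (j + axis m ((i+1) * int (N$m))) = f ((j + axis m (i * int (N$m))) + axis m (int (N$m)))"
    by (simp add: algebra_simps axis_add)
  also have "\<dots> = f j" using assms step1 by (simp add: per_def)
  finally show ?case .
next
  case (step2 i)
  have "f (j + axis m ((i - 1) * int (N$m))) = f ((j + axis m ((i - 1) * int (N$m))) + axis m (int (N$m)))"
    using assms by (simp add: per_def)
  also have "\<dots> = f (j + axis m (i * int (N$m)))"
    by (simp add: add.assoc axis_add[symmetric] algebra_simps)
  finally show ?case using step2 by simp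
qed

definition red :: "nat^'d::finite \<Rightarrow> int^'d \<Rightarrow> int^'d" where
  "red N j = (\<chi> m. j$m mod int (N$m))"

lemma per_red_aux:
  assumes "per N f" "finite S"
  shows "f (\<chi> m. if m \<in> S then j$m mod int (N$m) else j$m) = f j"
  using assms(2)
proof (induction S rule: finite_induct)
  case empty then show ?case by simp
next
  case (insert a S)
  have "(\<chi> m. if m \<in> insert a S then j$m mod int (N$m) else j$m) =
        (\<chi> m. if m \<in> S then j$m mod int (N$m) else j$m) + axis a ((- (j$a div int (N$a))) * int (N$a))"
    using insert(2) by (auto simp: vec_eq_iff axis_def minus_div_mult_eq_mod[symmetric])
  then show ?case using per_mult[OF assms(1), of _ a "- (j$a div int (N$a))"] insert by simp
qed

lemma per_red: "per N f \<Longrightarrow> f (red N j) = f j"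
  using per_red_aux[of N f UNIV j] by (simp add: red_def)

lemma finite_cell_box: "finite (cell_box N)"
proof -
  have "cell_box N \<subseteq> (\<lambda>g. \<chi> m. g m) ` (PiE UNIV (\<lambda>m. {0..<int (N$m)}))"
  proof
    fix j assume "j \<in> cell_box N"
    then have "(\<lambda>m. j$m) \<in> PiE UNIV (\<lambda>m. {0..<int (N$m)})" by (auto simp: cell_box_def)
    then show "j \<in> (\<lambda>g. \<chi> m. g m) ` (PiE UNIV (\<lambda>m. {0..<int (N$m)}))"
      by (intro image_eqI[of _ _ "(\<lambda>m. j$m)"]) auto
  qed
  then show ?thesis by (rule finite_subset) (intro finite_imageI finite_PiE, auto)
qed

lemma shift_sum:
  fixes f :: "int^'d::finite \<Rightarrow> 'a::comm_monoid_add"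
  assumes "per N f" "\<forall>m. 0 < N$m"
  shows "(\<Sum>j\<in>cell_box N. f (j + c)) = (\<Sum>j\<in>cell_box N. f j)"
proof -
  have "(\<Sum>j\<in>cell_box N. f (j + c)) = (\<Sum>j\<in>cell_box N. f (red N (j + c)))"
    using per_red[OF assms(1)] by simp
  also have "\<dots> = (\<Sum>j\<in>cell_box N. f j)"
  proof (rule sum.reindex_bij_witness[where j="\<lambda>a. red N (a + c)" and i="\<lambda>b. red N (b - c)"])
    fix a assume "a \<in> cell_box N"
    then show "red N (red N (a + c) - c) = a"
      by (auto simp: red_def vec_eq_iff cell_box_def mod_diff_left_eq)
  next
    fix a assume "a \<in> cell_box N"
    then show "red N (a + c) \<in> cell_box N"
      using assms(2) by (auto simp: red_def cell_box_def)
  next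
    fix b assume "b \<in> cell_box N"
    then show "red N (red N (b - c) + c) = b"
      by (auto simp: red_def vec_eq_iff cell_box_def mod_add_left_eq)
  next
    fix b assume "b \<in> cell_box N"
    then show "red N (b - c) \<in> cell_box N"
      using assms(2) by (auto simp: red_def cell_box_def)
  qed simp
  finally show ?thesis .
qed

definition dop :: "('d::finite \<Rightarrow> complex^'s::finite^'s) \<Rightarrow> ('d \<Rightarrow> real) \<Rightarrow> ('d,'s) gridfun \<Rightarrow> ('d,'s) gridfun" where
  "dop A c U = (\<lambda>j. \<Sum>m\<in>UNIV. c m *\<^sub>R (A m *v (U (j + axis m 1) - U (j - axis m 1))))"

lemma cmv_scaleR: "(A::complex^'n::finite^'m::finite) *v (r *\<^sub>R x) = r *\<^sub>R (A *v x)"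
  by (simp add: vec_eq_iff matrix_vector_mult_def scaleR_sum_right)

lemma cmv_neg: "(- (A::complex^'n::finite^'m::finite)) *v x = - (A *v x)"
  by (simp add: vec_eq_iff matrix_vector_mult_def sum_negf)

lemma central_dop: "central A dt dx U = (\<lambda>j. U j + dop A (\<lambda>m. dt / (2 * dx m)) U j)"
  by (simp add: central_def dop_def)

lemma backward_dop: "central_backward A dt dx U = (\<lambda>j. U j - dop A (\<lambda>m. dt / (2 * dx m)) U j)"
  by (simp add: central_backward_def central_def dop_def cmv_neg sum_negf)

lemma dop_add: "dop A c (\<lambda>j. U j + V j) = (\<lambda>j. dop A c U j + dop A c V j)"
  unfolding dop_def by (rule ext, subst sum.distrib[symmetric], rule sum.cong) (simp_all add: algebra_simps)

lemma dop_diff: "dop A c (\<lambda>j. U j - V j) = (\<lambda>j. dop A c U j - dop A c V j)"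
  unfolding dop_def by (rule ext, subst sum_subtractf[symmetric], rule sum.cong) (simp_all add: algebra_simps)

lemma dop_scale: "dop A c (\<lambda>j. r *\<^sub>R U j) = (\<lambda>j. r *\<^sub>R dop A c U j)"
  by (simp add: dop_def cmv_scaleR scaleR_sum_right scaleR_diff_right[symmetric] matrix_vector_mult_diff_distrib[symmetric] mult.commute)

lemma bfecc_dop:
  "bfecc A dt dx U =
    (let D = dop A (\<lambda>m. dt / (2 * dx m)); W = (\<lambda>j. U j + (1/2) *\<^sub>R D (D U) j)
     in (\<lambda>j. W j + D W j))"
proof -
  define D where "D = dop A (\<lambda>m. dt / (2 * dx m))"
  have 1: "central A dt dx U = (\<lambda>j. U j + D U j)" by (simp add: central_dop D_def)
  have 2: "central_backward A dt dx (\<lambda>j. U j + D U j) = (\<lambda>j. U j - D (D U) j)"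
  proof -
    have "D (\<lambda>j. U j + D U j) = (\<lambda>j. D U j + D (D U) j)" by (simp add: D_def dop_add)
    then show ?thesis unfolding backward_dop D_def[symmetric] by simp
  qed
  have 3: "(\<lambda>j. U j + (1/2) *\<^sub>R (U j - (U j - D (D U) j))) = (\<lambda>j. U j + (1/2) *\<^sub>R D (D U) j)"
    by simp
  show ?thesis unfolding bfecc_def Let_def 1 2 3 by (simp add: central_dop D_def)
qed

lemma per_dop:
  assumes "per N U" shows "per N (dop A c U)"
  unfolding per_def dop_def
proof (intro allI)
  fix j m
  have "U (j + axis m (int (N $ m)) + axis k 1) = U (j + axis k 1)"
     "U (j + axis m (int (N $ m)) - axis k 1) = U (j - axis k 1)" for k
    using assms unfolding per_def
  proof -
    have "j + axis m (int (N $ m)) + axis k 1 = (j + axis k 1) + axis m (int (N $ m))"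
      "j + axis m (int (N $ m)) - axis k 1 = (j - axis k 1) + axis m (int (N $ m))"
      by (simp_all add: algebra_simps)
    then show "U (j + axis m (int (N $ m)) + axis k 1) = U (j + axis k 1)"
     "U (j + axis m (int (N $ m)) - axis k 1) = U (j - axis k 1)"
      using assms unfolding per_def by metis+
  qed
  then show "(\<Sum>k\<in>UNIV. c k *\<^sub>R (A k *v (U (j + axis m (int (N $ m)) + axis k 1) - U (j + axis m (int (N $ m)) - axis k 1)))) =
       (\<Sum>k\<in>UNIV. c k *\<^sub>R (A k *v (U (j + axis k 1) - U (j - axis k 1))))" by simp
qed

definition ip :: "nat^'d::finite \<Rightarrow> ('d,'s::finite) gridfun \<Rightarrow> ('d,'s) gridfun \<Rightarrow> real" where
  "ip N U V = (\<Sum>j\<in>cell_box N. inner (U j) (V j))"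

lemma ip_add_left: "ip N (\<lambda>j. U j + V j) W = ip N U W + ip N V W"
  by (simp add: ip_def inner_add_left sum.distrib)
lemma ip_add_right: "ip N W (\<lambda>j. U j + V j) = ip N W U + ip N W V"
  by (simp add: ip_def inner_add_right sum.distrib)
lemma ip_scale_left: "ip N (\<lambda>j. r *\<^sub>R U j) W = r * ip N U W"
  by (simp add: ip_def sum_distrib_left)
lemma ip_scale_right: "ip N W (\<lambda>j. r *\<^sub>R U j) = r * ip N W U"
  by (simp add: ip_def sum_distrib_left)
lemma ip_sym: "ip N U V = ip N V U"
  by (simp add: ip_def inner_commute)
lemma ip_nonneg: "0 \<le> ip N U U"
  by (simp add: ip_def sum_nonneg)

definition herm :: "complex^'s::finite^'s \<Rightarrow> bool" where
  "herm M \<longleftrightarrow> (\<forall>a b. cnj (M$a$b) = M$b$a)"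

lemma inner_complex_Re: "inner (a::complex) b = Re (a * cnj b)"
  by (simp add: inner_complex_def)

lemma herm_inner:
  assumes "herm M"
  shows "inner (M *v x) y = inner x (M *v y)"
proof -
  have "inner (M *v x) y = (\<Sum>i\<in>UNIV. \<Sum>j\<in>UNIV. Re (M$i$j * x$j * cnj (y$i)))"
    by (simp add: inner_vec_def inner_complex_Re matrix_vector_mult_def sum_distrib_right)
  also have "\<dots> = (\<Sum>j\<in>UNIV. \<Sum>i\<in>UNIV. Re (M$i$j * x$j * cnj (y$i)))"
    by (rule sum.swap)
  also have "\<dots> = (\<Sum>j\<in>UNIV. Re (x$j * cnj (\<Sum>i\<in>UNIV. M$j$i * y$i)))"
  proof (rule sum.cong[OF refl])
    fix j
    have "cnj (M$j$i) = M$i$j" for i using assms unfolding herm_def by blast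
    then show "(\<Sum>i\<in>UNIV. Re (M$i$j * x$j * cnj (y$i))) = Re (x$j * cnj (\<Sum>i\<in>UNIV. M$j$i * y$i))"
      by (simp add: sum_distrib_left mult.commute mult.left_commute)
  qed
  also have "\<dots> = inner x (M *v y)"
    by (simp add: inner_vec_def inner_complex_Re matrix_vector_mult_def)
  finally show ?thesis .
qed

lemma per_shift: "per N f \<Longrightarrow> per N (\<lambda>j. f (j + d))"
  unfolding per_def by (metis add.commute add.left_commute)

lemma per_comb: "per N f \<Longrightarrow> per N g \<Longrightarrow> per N (\<lambda>j. H (f j) (g j))"
  unfolding per_def by simp

lemma per_app: "per N f \<Longrightarrow> per N (\<lambda>j. H (f j))"
  unfolding per_def by simp

lemma shift_part:
  fixes x y :: "('d::finite,'s::finite) gridfun"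
  assumes "herm M" "per N x" "per N y" "\<forall>m. 0 < N$m"
  shows "(\<Sum>j\<in>cell_box N. inner (M *v (x (j + e) - x (j - e))) (y j)) =
         (\<Sum>j\<in>cell_box N. inner (x j) (M *v (y (j - e) - y (j + e))))"
proof -
  have pF: "per N (\<lambda>j. inner (x j) (M *v y (j + (- e))))"
    by (rule per_comb[OF assms(2) per_shift[OF assms(3)]])
  have pG: "per N (\<lambda>j. inner (x j) (M *v y (j + e)))"
    by (rule per_comb[OF assms(2) per_shift[OF assms(3)]])
  have s1: "(\<Sum>j\<in>cell_box N. inner (x (j + e)) (M *v y j)) = (\<Sum>j\<in>cell_box N. inner (x j) (M *v y (j - e)))"
    using shift_sum[OF pF assms(4), of e] by simp
  have s2: "(\<Sum>j\<in>cell_box N. inner (x (j - e)) (M *v y j)) = (\<Sum>j\<in>cell_box N. inner (x j) (M *v y (j + e)))"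
    using shift_sum[OF pG assms(4), of "- e"] by simp
  have "(\<Sum>j\<in>cell_box N. inner (M *v (x (j + e) - x (j - e))) (y j)) =
        (\<Sum>j\<in>cell_box N. inner (x (j + e)) (M *v y j)) - (\<Sum>j\<in>cell_box N. inner (x (j - e)) (M *v y j))"
    by (simp add: herm_inner[OF assms(1)] matrix_vector_mult_diff_distrib inner_diff_left sum_subtractf)
  also have "\<dots> = (\<Sum>j\<in>cell_box N. inner (x j) (M *v (y (j - e) - y (j + e))))"
    unfolding s1 s2 by (simp add: matrix_vector_mult_diff_distrib inner_diff_right sum_subtractf)
  finally show ?thesis .
qed

lemma dop_skew:
  assumes "\<forall>m. herm (A m)" "per N x" "per N y" "\<forall>m. 0 < N$m"
  shows "ip N (dop A c x) y = - ip N x (dop A c y)"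
proof -
  have "ip N (dop A c x) y = (\<Sum>m\<in>UNIV. c m * (\<Sum>j\<in>cell_box N. inner (A m *v (x (j + axis m 1) - x (j - axis m 1))) (y j)))"
    unfolding ip_def dop_def by (simp add: inner_sum_left sum_distrib_left) (rule sum.swap)
  also have "\<dots> = (\<Sum>m\<in>UNIV. c m * (\<Sum>j\<in>cell_box N. inner (x j) (A m *v (y (j - axis m 1) - y (j + axis m 1)))))"
    using shift_part[OF _ assms(2,3,4)] assms(1) by simp
  also have "\<dots> = - ip N x (dop A c y)"
    unfolding ip_def dop_def
    by (simp add: inner_sum_right sum_distrib_left sum_negf[symmetric] matrix_vector_mult_diff_distrib inner_diff_right)
       (subst sum.swap, intro sum.cong refl, simp add: algebra_simps)
  finally show ?thesis .
qed

lemma energy: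
  fixes A :: "'d::finite \<Rightarrow> complex^'s::finite^'s"
  assumes herm: "\<forall>m. herm (A m)" and N: "\<forall>m. 0 < N$m" and pu: "per N u"
    and bnd: "\<And>v. per N v \<Longrightarrow> ip N (dop A c v) (dop A c v) \<le> 3 * ip N v v"
  defines "W \<equiv> (\<lambda>j. u j + (1/2) *\<^sub>R dop A c (dop A c u) j)"
  shows "ip N (\<lambda>j. W j + dop A c W j) (\<lambda>j. W j + dop A c W j) \<le> ip N u u"
    and "per N (\<lambda>j. W j + dop A c W j)"
proof -
  let ?D = "dop A c"
  define u1 where "u1 = ?D u"
  define u2 where "u2 = ?D u1"
  define u3 where "u3 = ?D u2"
  have p1: "per N u1" unfolding u1_def by (rule per_dop[OF pu])
  have p2: "per N u2" unfolding u2_def by (rule per_dop[OF p1])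
  have p3: "per N u3" unfolding u3_def by (rule per_dop[OF p2])
  have pW: "per N W" unfolding W_def u1_def[symmetric] u2_def[symmetric]
    by (rule per_comb[OF pu per_app[OF p2]])
  have pDW: "per N (?D W)" by (rule per_dop[OF pW])
  show "per N (\<lambda>j. W j + dop A c W j)" by (rule per_comb[OF pW pDW])
  have sk: "\<And>x y. per N x \<Longrightarrow> per N y \<Longrightarrow> ip N (?D x) y = - ip N x (?D y)"
    using dop_skew[OF herm _ _ N] by blast
  have DW: "?D W = (\<lambda>j. u1 j + (1/2) *\<^sub>R u3 j)"
    unfolding W_def dop_add dop_scale u1_def u2_def u3_def by simp
  have W': "W = (\<lambda>j. u j + (1/2) *\<^sub>R u2 j)" unfolding W_def u1_def u2_def by simp
  have cross: "ip N W (?D W) = 0"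
    using sk[OF pW pW] ip_sym[of N W "?D W"] by simp
  have e1: "ip N u u2 = - ip N u1 u1"
    using sk[OF pu p1] ip_sym[of N u u2] unfolding u2_def u1_def by simp
  have e2: "ip N u1 u3 = - ip N u2 u2"
    using sk[OF p1 p2] ip_sym[of N u1 u3] unfolding u3_def u2_def by simp
  have e1': "ip N u2 u = - ip N u1 u1" using e1 ip_sym by metis
  have e2': "ip N u3 u1 = - ip N u2 u2" using e2 ip_sym by metis
  have WW: "ip N W W = ip N u u - ip N u1 u1 + (1/4) * ip N u2 u2"
    unfolding W' ip_add_left ip_add_right ip_scale_left ip_scale_right e1 e1' by simp
  have DWDW: "ip N (?D W) (?D W) = ip N u1 u1 - ip N u2 u2 + (1/4) * ip N u3 u3"
    unfolding DW ip_add_left ip_add_right ip_scale_left ip_scale_right e2 e2' by simp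
  have b3: "ip N u3 u3 \<le> 3 * ip N u2 u2" unfolding u3_def by (rule bnd[OF p2])
  have "ip N (\<lambda>j. W j + ?D W j) (\<lambda>j. W j + ?D W j) = ip N W W + 2 * ip N W (?D W) + ip N (?D W) (?D W)"
    unfolding ip_add_left ip_add_right using ip_sym[of N W "?D W"] by simp
  also have "\<dots> = ip N u u - (3/4) * ip N u2 u2 + (1/4) * ip N u3 u3"
    unfolding WW DWDW cross by simp
  also have "\<dots> \<le> ip N u u" using b3 by simp
  finally show "ip N (\<lambda>j. W j + dop A c W j) (\<lambda>j. W j + dop A c W j) \<le> ip N u u" .
qed

definition dlt :: "'d::finite \<Rightarrow> (int^'d \<Rightarrow> 'a::ab_group_add) \<Rightarrow> int^'d \<Rightarrow> 'a" where
  "dlt m f j = f (j + axis m 1) - f (j - axis m 1)"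

lemma dop_comp:
  "dop A c v j $ a = (\<Sum>m\<in>UNIV. of_real (c m) * (\<Sum>b\<in>UNIV. A m $ a $ b * dlt m (\<lambda>j. v j $ b) j))"
  unfolding dop_def sum_component vector_scaleR_component
  by (simp add: dlt_def matrix_vector_mult_def scaleR_conv_of_real)

lemma ip_comp: "ip N v v = (\<Sum>j\<in>cell_box N. \<Sum>a\<in>UNIV. (cmod (v j $ a))\<^sup>2)"
  by (simp add: ip_def inner_vec_def power2_norm_eq_inner)

lemma m1_comp:
  "dop maxwell1 c v j $ 1 = of_real (c 1) * dlt 1 (\<lambda>j. v j $ 2) j"
  "dop maxwell1 c v j $ 2 = of_real (c 1) * dlt 1 (\<lambda>j. v j $ 1) j"
  by (simp_all add: dop_comp maxwell1_def sum_2)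

lemma m2_comp:
  "dop maxwell2 c v j $ 1 = of_real (c 2) * dlt 2 (\<lambda>j. v j $ 2) j"
  "dop maxwell2 c v j $ 3 = - (of_real (c 1) * dlt 1 (\<lambda>j. v j $ 2) j)"
  "dop maxwell2 c v j $ 2 = of_real (c 2) * dlt 2 (\<lambda>j. v j $ 1) j - of_real (c 1) * dlt 1 (\<lambda>j. v j $ 3) j"
  by (simp_all add: dop_comp maxwell2_def sum_2 sum_3)

lemma sum_2x_if:
  "(\<Sum>k\<in>(UNIV::(2\<times>'b::finite) set). (if fst k = p then g (snd k) else 0) * x k) = (\<Sum>b\<in>UNIV. g b * x (p, b) :: complex)"
proof -
  have "(\<Sum>k\<in>(UNIV::(2\<times>'b::finite) set). (if fst k = p then g (snd k) else 0) * x k)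
      = (\<Sum>q\<in>UNIV. \<Sum>b\<in>UNIV. (if q = p then g b else 0) * x (q, b))"
    unfolding UNIV_Times_UNIV[symmetric] sum.cartesian_product by (rule sum.cong) (auto split: prod.splits)
  also have "\<dots> = (\<Sum>q\<in>UNIV. if q = p then (\<Sum>b\<in>UNIV. g b * x (p, b)) else 0)"
    by (rule sum.cong) auto
  also have "\<dots> = (\<Sum>b\<in>UNIV. g b * x (p, b))" by simp
  finally show ?thesis .
qed

lemma m3_row0: "maxwell3 m $ (0,a) $ k = (if fst k = 1 then levi_civita a m (snd k) else 0)"
  by (simp add: maxwell3_def)
lemma m3_row1: "maxwell3 m $ (1,a) $ k = (if fst k = 0 then - levi_civita a m (snd k) else 0)"
  by (simp add: maxwell3_def)

lemma m3_comp0: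
  "dop maxwell3 c v j $ (0,a) = (\<Sum>m\<in>UNIV. of_real (c m) * (\<Sum>b\<in>UNIV. levi_civita a m b * dlt m (\<lambda>j. v j $ (1,b)) j))"
  unfolding dop_comp m3_row0
proof (rule sum.cong[OF refl])
  fix m :: 3
  show "of_real (c m) * (\<Sum>b\<in>UNIV. (if fst b = 1 then levi_civita a m (snd b) else 0) * dlt m (\<lambda>j. v j $ b) j)
     = of_real (c m) * (\<Sum>b\<in>UNIV. levi_civita a m b * dlt m (\<lambda>j. v j $ (1,b)) j)"
    using sum_2x_if[of 1 "\<lambda>b. levi_civita a m b" "\<lambda>k. dlt m (\<lambda>j. v j $ k) j"] by simp
qed
lemma m3_comp1:
  "dop maxwell3 c v j $ (1,a) = - (\<Sum>m\<in>UNIV. of_real (c m) * (\<Sum>b\<in>UNIV. levi_civita a m b * dlt m (\<lambda>j. v j $ (0,b)) j))"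
  unfolding dop_comp m3_row1 sum_negf[symmetric]
proof (rule sum.cong[OF refl])
  fix m :: 3
  show "of_real (c m) * (\<Sum>b\<in>UNIV. (if fst b = 0 then - levi_civita a m (snd b) else 0) * dlt m (\<lambda>j. v j $ b) j)
     = - (of_real (c m) * (\<Sum>b\<in>UNIV. levi_civita a m b * dlt m (\<lambda>j. v j $ (0,b)) j))"
    using sum_2x_if[of 0 "\<lambda>b. - levi_civita a m b" "\<lambda>k. dlt m (\<lambda>j. v j $ k) j"] by (simp add: sum_negf)
qed

lemma curl_comp:
  "(\<Sum>m\<in>UNIV. of_real (c m) * (\<Sum>b\<in>UNIV. levi_civita 1 m b * F m b)) = of_real (c 2) * F 2 3 - of_real (c 3) * F 3 2"
  "(\<Sum>m\<in>UNIV. of_real (c m) * (\<Sum>b\<in>UNIV. levi_civita 2 m b * F m b)) = of_real (c 3) * F 3 1 - of_real (c 1) * F 1 3"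
  "(\<Sum>m\<in>UNIV. of_real (c m) * (\<Sum>b\<in>UNIV. levi_civita 3 m b * F m b)) = of_real (c 1) * F 1 2 - of_real (c 2) * F 2 1"
  by (simp_all add: sum_3 levi_civita_def)

lemma sq_diff_le: "(cmod (a - b))\<^sup>2 \<le> 2 * (cmod a)\<^sup>2 + 2 * (cmod b)\<^sup>2"
proof -
  have "cmod (a - b) \<le> cmod a + cmod b" by (rule norm_triangle_ineq4)
  then have "(cmod (a - b))\<^sup>2 \<le> (cmod a + cmod b)\<^sup>2" by (simp add: power_mono)
  also have "\<dots> \<le> 2 * (cmod a)\<^sup>2 + 2 * (cmod b)\<^sup>2"
    using sum_squares_bound[of "cmod a" "cmod b"] by (simp add: power2_eq_square algebra_simps)
  finally show ?thesis .
qed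

lemma dlt_bound:
  fixes f :: "int^'d::finite \<Rightarrow> complex"
  assumes "per N f" "\<forall>m. 0 < N$m"
  shows "(\<Sum>j\<in>cell_box N. (cmod (dlt m f j))\<^sup>2) \<le> 4 * (\<Sum>j\<in>cell_box N. (cmod (f j))\<^sup>2)"
proof -
  have p: "per N (\<lambda>j. (cmod (f j))\<^sup>2)" by (rule per_app[OF assms(1)])
  have s1: "(\<Sum>j\<in>cell_box N. (cmod (f (j + axis m 1)))\<^sup>2) = (\<Sum>j\<in>cell_box N. (cmod (f j))\<^sup>2)"
    using shift_sum[OF p assms(2)] by simp
  have s2: "(\<Sum>j\<in>cell_box N. (cmod (f (j - axis m 1)))\<^sup>2) = (\<Sum>j\<in>cell_box N. (cmod (f j))\<^sup>2)"
    using shift_sum[OF p assms(2), of "- axis m 1"] by simp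
  have "(\<Sum>j\<in>cell_box N. (cmod (dlt m f j))\<^sup>2) \<le>
        (\<Sum>j\<in>cell_box N. 2 * (cmod (f (j + axis m 1)))\<^sup>2 + 2 * (cmod (f (j - axis m 1)))\<^sup>2)"
    unfolding dlt_def by (rule sum_mono, rule sq_diff_le)
  also have "\<dots> = 4 * (\<Sum>j\<in>cell_box N. (cmod (f j))\<^sup>2)"
    by (simp add: sum.distrib sum_distrib_left[symmetric] s1 s2)
  finally show ?thesis .
qed

lemma shift2:
  fixes f g :: "int^'d::finite \<Rightarrow> complex"
  assumes "per N f" "per N g" "\<forall>m. 0 < N$m"
  shows "(\<Sum>j\<in>cell_box N. f (j + p) * cnj (g (j + q))) = (\<Sum>j\<in>cell_box N. f (j + (p - q)) * cnj (g j))"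
proof -
  have "per N (\<lambda>j. f (j + (p - q)) * cnj (g j))"
    by (rule per_comb[OF per_shift[OF assms(1)] assms(2)])
  from shift_sum[OF this assms(3), of q] show ?thesis
    by (simp add: algebra_simps)
qed

lemma sbp:
  fixes f g :: "int^'d::finite \<Rightarrow> complex"
  assumes "per N f" "per N g" "\<forall>m. 0 < N$m"
  shows "(\<Sum>j\<in>cell_box N. dlt m f j * cnj (dlt k g j)) = (\<Sum>j\<in>cell_box N. dlt k f j * cnj (dlt m g j))"
proof -
  note s = shift2[OF assms]
  have e: "dlt m f j * cnj (dlt k g j) =
     f (j + axis m 1) * cnj (g (j + axis k 1)) - f (j + axis m 1) * cnj (g (j + - axis k 1))
     - f (j + - axis m 1) * cnj (g (j + axis k 1)) + f (j + - axis m 1) * cnj (g (j + - axis k 1))" for m k j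
    by (simp add: dlt_def algebra_simps)
  show ?thesis
    unfolding e sum.distrib sum_subtractf s
    by (simp add: algebra_simps)
qed

lemma cmod_diff_sq: "(cmod (p - q))\<^sup>2 = (cmod p)\<^sup>2 + (cmod q)\<^sup>2 - 2 * Re (p * cnj q)"
  by (simp only: cmod_power2) (simp add: power2_eq_square algebra_simps)

lemma cmod_sum3_sq: "(cmod (p + q + r))\<^sup>2 = (cmod p)\<^sup>2 + (cmod q)\<^sup>2 + (cmod r)\<^sup>2 + 2 * Re (p * cnj q) + 2 * Re (p * cnj r) + 2 * Re (q * cnj r)"
  by (simp only: cmod_power2) (simp add: power2_eq_square algebra_simps)

lemma cs2: "(cmod (of_real a * p - of_real b * q))\<^sup>2 \<le> (a\<^sup>2 + b\<^sup>2) * ((cmod p)\<^sup>2 + (cmod q)\<^sup>2)"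
proof -
  have "cmod (of_real a * p - of_real b * q) \<le> \<bar>a\<bar> * cmod p + \<bar>b\<bar> * cmod q"
    using norm_triangle_ineq4[of "of_real a * p" "of_real b * q"] by (simp add: norm_mult)
  then have "(cmod (of_real a * p - of_real b * q))\<^sup>2 \<le> (\<bar>a\<bar> * cmod p + \<bar>b\<bar> * cmod q)\<^sup>2"
    by (simp add: power_mono)
  also have "\<dots> = (a\<^sup>2 + b\<^sup>2) * ((cmod p)\<^sup>2 + (cmod q)\<^sup>2) - (\<bar>a\<bar> * cmod q - \<bar>b\<bar> * cmod p)\<^sup>2"
    by (simp add: power2_eq_square algebra_simps)
  also have "\<dots> \<le> (a\<^sup>2 + b\<^sup>2) * ((cmod p)\<^sup>2 + (cmod q)\<^sup>2)" by simp
  finally show ?thesis .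
qed

lemma cmod_ofreal_sq: "(cmod (of_real a * z))\<^sup>2 = a\<^sup>2 * (cmod z)\<^sup>2"
  by (simp add: norm_mult power_mult_distrib)

lemma m1_bound:
  assumes "per N v" "\<forall>m. 0 < N$m"
  shows "ip N (dop maxwell1 c v) (dop maxwell1 c v) \<le> 4 * (c 1)\<^sup>2 * ip N v v"
proof -
  have pF: "per N (\<lambda>j. v j $ b)" for b by (rule per_app[OF assms(1)])
  note db = dlt_bound[OF pF assms(2)]
  have "ip N (dop maxwell1 c v) (dop maxwell1 c v) =
     (c 1)\<^sup>2 * ((\<Sum>j\<in>cell_box N. (cmod (dlt 1 (\<lambda>j. v j $ 2) j))\<^sup>2) + (\<Sum>j\<in>cell_box N. (cmod (dlt 1 (\<lambda>j. v j $ 1) j))\<^sup>2))"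
    unfolding ip_comp sum_2 m1_comp cmod_ofreal_sq by (simp add: sum.distrib sum_distrib_left distrib_left)
  also have "\<dots> \<le> (c 1)\<^sup>2 * (4 * (\<Sum>j\<in>cell_box N. (cmod (v j $ 2))\<^sup>2) + 4 * (\<Sum>j\<in>cell_box N. (cmod (v j $ 1))\<^sup>2))"
    by (intro mult_left_mono add_mono db) simp
  also have "\<dots> = 4 * (c 1)\<^sup>2 * ip N v v"
    unfolding ip_comp sum_2 by (simp add: sum.distrib algebra_simps)
  finally show ?thesis .
qed

lemma m2_bound:
  assumes "per N v" "\<forall>m. 0 < N$m"
  shows "ip N (dop maxwell2 c v) (dop maxwell2 c v) \<le> 4 * ((c 1)\<^sup>2 + (c 2)\<^sup>2) * ip N v v"
proof -
  have pF: "per N (\<lambda>j. v j $ b)" for b by (rule per_app[OF assms(1)])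
  note db = dlt_bound[OF pF assms(2)]
  let ?S = "\<lambda>b. (\<Sum>j\<in>cell_box N. (cmod (v j $ b))\<^sup>2)"
  let ?T = "\<lambda>m b. (\<Sum>j\<in>cell_box N. (cmod (dlt m (\<lambda>j. v j $ b) j))\<^sup>2)"
  have "ip N (dop maxwell2 c v) (dop maxwell2 c v) =
     (\<Sum>j\<in>cell_box N. (c 2)\<^sup>2 * (cmod (dlt 2 (\<lambda>j. v j $ 2) j))\<^sup>2 +
        (cmod (of_real (c 2) * dlt 2 (\<lambda>j. v j $ 1) j - of_real (c 1) * dlt 1 (\<lambda>j. v j $ 3) j))\<^sup>2 +
        (c 1)\<^sup>2 * (cmod (dlt 1 (\<lambda>j. v j $ 2) j))\<^sup>2)"
    unfolding ip_comp sum_3 m2_comp cmod_ofreal_sq norm_minus_cancel by simp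
  also have "\<dots> \<le> (\<Sum>j\<in>cell_box N. (c 2)\<^sup>2 * (cmod (dlt 2 (\<lambda>j. v j $ 2) j))\<^sup>2 +
        ((c 2)\<^sup>2 + (c 1)\<^sup>2) * ((cmod (dlt 2 (\<lambda>j. v j $ 1) j))\<^sup>2 + (cmod (dlt 1 (\<lambda>j. v j $ 3) j))\<^sup>2) +
        (c 1)\<^sup>2 * (cmod (dlt 1 (\<lambda>j. v j $ 2) j))\<^sup>2)"
    by (intro sum_mono add_mono cs2 order_refl)
  also have "\<dots> = (c 2)\<^sup>2 * ?T 2 2 + ((c 2)\<^sup>2 + (c 1)\<^sup>2) * (?T 2 1 + ?T 1 3) + (c 1)\<^sup>2 * ?T 1 2"
    by (simp add: sum.distrib sum_distrib_left[symmetric])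
  also have "\<dots> \<le> (c 2)\<^sup>2 * (4 * ?S 2) + ((c 2)\<^sup>2 + (c 1)\<^sup>2) * (4 * ?S 1 + 4 * ?S 3) + (c 1)\<^sup>2 * (4 * ?S 2)"
    by (intro add_mono mult_left_mono db) simp_all
  also have "\<dots> = 4 * ((c 1)\<^sup>2 + (c 2)\<^sup>2) * ip N v v"
    unfolding ip_comp sum_3 by (simp add: sum.distrib algebra_simps)
  finally show ?thesis .
qed

lemma re_cnj_sym: "Re (z * cnj w) = Re (w * cnj z)"
  by simp

lemma curl_bound:
  fixes F :: "3 \<Rightarrow> int^'d::finite \<Rightarrow> complex" and c :: "3 \<Rightarrow> real" and d :: "3 \<Rightarrow> 'd"
  assumes pF: "\<And>b. per N (F b)" and N: "\<forall>m. 0 < N$m"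
  defines "g \<equiv> (\<lambda>m b j. of_real (c m) * dlt (d m) (F b) j)"
  shows "(\<Sum>j\<in>cell_box N. (cmod (g 2 3 j - g 3 2 j))\<^sup>2 + (cmod (g 3 1 j - g 1 3 j))\<^sup>2 + (cmod (g 1 2 j - g 2 1 j))\<^sup>2)
     \<le> 4 * ((c 1)\<^sup>2 + (c 2)\<^sup>2 + (c 3)\<^sup>2) * (\<Sum>j\<in>cell_box N. (cmod (F 1 j))\<^sup>2 + (cmod (F 2 j))\<^sup>2 + (cmod (F 3 j))\<^sup>2)"
proof -
  define Q where "Q m b = (\<Sum>j\<in>cell_box N. (cmod (g m b j))\<^sup>2)" for m b
  define X where "X p q r s = (\<Sum>j\<in>cell_box N. Re (g p q j * cnj (g r s j)))" for p q r s
  define S where "S b = (\<Sum>j\<in>cell_box N. (cmod (F b j))\<^sup>2)" for b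
  have sb: "X m b b m = X b b m m" for m b
  proof -
    have "(\<Sum>j\<in>cell_box N. g m b j * cnj (g b m j)) = of_real (c m * c b) * (\<Sum>j\<in>cell_box N. dlt (d m) (F b) j * cnj (dlt (d b) (F m) j))"
      unfolding g_def by (simp add: sum_distrib_left algebra_simps)
    also have "\<dots> = of_real (c m * c b) * (\<Sum>j\<in>cell_box N. dlt (d b) (F b) j * cnj (dlt (d m) (F m) j))"
      using sbp[OF pF pF N] by simp
    also have "\<dots> = (\<Sum>j\<in>cell_box N. g b b j * cnj (g m m j))"
      unfolding g_def by (simp add: sum_distrib_left algebra_simps)
    finally show ?thesis unfolding X_def Re_sum[symmetric] by simp
  qed
  have sym: "X p q r s = X r s p q" for p q r s
    unfolding X_def by (simp add: mult.commute)
  have Qb: "Q m b \<le> 4 * (c m)\<^sup>2 * S b" for m b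
  proof -
    have "Q m b = (c m)\<^sup>2 * (\<Sum>j\<in>cell_box N. (cmod (dlt (d m) (F b) j))\<^sup>2)"
      unfolding Q_def g_def cmod_ofreal_sq by (simp add: sum_distrib_left)
    also have "\<dots> \<le> (c m)\<^sup>2 * (4 * S b)"
      unfolding S_def by (intro mult_left_mono dlt_bound[OF pF N]) simp
    finally show ?thesis by simp
  qed
  have nn: "0 \<le> (\<Sum>j\<in>cell_box N. (cmod (g 1 1 j + g 2 2 j + g 3 3 j))\<^sup>2)" by (simp add: sum_nonneg)
  then have nn': "0 \<le> Q 1 1 + Q 2 2 + Q 3 3 + 2 * X 1 1 2 2 + 2 * X 1 1 3 3 + 2 * X 2 2 3 3"
    unfolding cmod_sum3_sq Q_def X_def by (simp add: sum.distrib sum_distrib_left)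
  have "(\<Sum>j\<in>cell_box N. (cmod (g 2 3 j - g 3 2 j))\<^sup>2 + (cmod (g 3 1 j - g 1 3 j))\<^sup>2 + (cmod (g 1 2 j - g 2 1 j))\<^sup>2)
     = Q 2 3 + Q 3 2 + Q 3 1 + Q 1 3 + Q 1 2 + Q 2 1 - 2 * X 2 3 3 2 - 2 * X 3 1 1 3 - 2 * X 1 2 2 1"
    unfolding cmod_diff_sq Q_def X_def by (simp add: sum.distrib sum_subtractf sum_distrib_left)
  also have "\<dots> \<le> Q 1 1 + Q 1 2 + Q 1 3 + Q 2 1 + Q 2 2 + Q 2 3 + Q 3 1 + Q 3 2 + Q 3 3"
    using nn' sb[of 2 3] sb[of 3 1] sb[of 1 2] sym[of 3 3 2 2] sym[of 2 2 1 1] by linarith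
  also have "\<dots> \<le> 4 * ((c 1)\<^sup>2 + (c 2)\<^sup>2 + (c 3)\<^sup>2) * (S 1 + S 2 + S 3)"
    using Qb[of 1 1] Qb[of 1 2] Qb[of 1 3] Qb[of 2 1] Qb[of 2 2] Qb[of 2 3] Qb[of 3 1] Qb[of 3 2] Qb[of 3 3]
    by (simp add: algebra_simps)
  also have "\<dots> = 4 * ((c 1)\<^sup>2 + (c 2)\<^sup>2 + (c 3)\<^sup>2) * (\<Sum>j\<in>cell_box N. (cmod (F 1 j))\<^sup>2 + (cmod (F 2 j))\<^sup>2 + (cmod (F 3 j))\<^sup>2)"
    unfolding S_def by (simp add: sum.distrib)
  finally show ?thesis .
qed

lemma sum_2': "sum f (UNIV::2 set) = f 0 + f 1"
proof -
  have e: "(2::2) = 0" by simp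
  show ?thesis by (metis sum_2 e add.commute)
qed

lemma sum_2x3: "(\<Sum>k\<in>(UNIV::(2\<times>3) set). f k) = (f (0,1) + f (0,2) + f (0,3)) + (f (1,1) + f (1,2) + f (1,3))"
proof -
  have "sum f (UNIV::(2\<times>3) set) = sum f (UNIV \<times> UNIV)" by simp
  also have "\<dots> = (\<Sum>a\<in>UNIV. \<Sum>b\<in>UNIV. f (a,b))" by (simp add: sum.cartesian_product)
  finally show ?thesis by (simp add: sum_2' sum_3)
qed

lemma m3_bound:
  assumes "per N v" "\<forall>m. 0 < N$m"
  shows "ip N (dop maxwell3 c v) (dop maxwell3 c v) \<le> 4 * ((c 1)\<^sup>2 + (c 2)\<^sup>2 + (c 3)\<^sup>2) * ip N v v"
proof -
  have pF: "per N (\<lambda>j. v j $ b)" for b by (rule per_app[OF assms(1)])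
  let ?K = "4 * ((c 1)\<^sup>2 + (c 2)\<^sup>2 + (c 3)\<^sup>2)"
  define gE where "gE = (\<lambda>m b j. of_real (c m) * dlt ((\<lambda>m. m) m) ((\<lambda>b j. v j $ (0::2,b)) b) j)"
  define gH where "gH = (\<lambda>m b j. of_real (c m) * dlt ((\<lambda>m. m) m) ((\<lambda>b j. v j $ (1::2,b)) b) j)"
  have bE: "(\<Sum>j\<in>cell_box N. (cmod (gE 2 3 j - gE 3 2 j))\<^sup>2 + (cmod (gE 3 1 j - gE 1 3 j))\<^sup>2 + (cmod (gE 1 2 j - gE 2 1 j))\<^sup>2)
     \<le> ?K * (\<Sum>j\<in>cell_box N. (cmod (v j $ (0,1)))\<^sup>2 + (cmod (v j $ (0,2)))\<^sup>2 + (cmod (v j $ (0,3)))\<^sup>2)"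
    unfolding gE_def using curl_bound[where F="\<lambda>b j. v j $ (0,b)" and d="\<lambda>m. m" and c=c, OF pF assms(2)] by simp
  have bH: "(\<Sum>j\<in>cell_box N. (cmod (gH 2 3 j - gH 3 2 j))\<^sup>2 + (cmod (gH 3 1 j - gH 1 3 j))\<^sup>2 + (cmod (gH 1 2 j - gH 2 1 j))\<^sup>2)
     \<le> ?K * (\<Sum>j\<in>cell_box N. (cmod (v j $ (1,1)))\<^sup>2 + (cmod (v j $ (1,2)))\<^sup>2 + (cmod (v j $ (1,3)))\<^sup>2)"
    unfolding gH_def using curl_bound[where F="\<lambda>b j. v j $ (1,b)" and d="\<lambda>m. m" and c=c, OF pF assms(2)] by simp
  have "ip N (dop maxwell3 c v) (dop maxwell3 c v) =
     (\<Sum>j\<in>cell_box N. (cmod (gH 2 3 j - gH 3 2 j))\<^sup>2 + (cmod (gH 3 1 j - gH 1 3 j))\<^sup>2 + (cmod (gH 1 2 j - gH 2 1 j))\<^sup>2) +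
     (\<Sum>j\<in>cell_box N. (cmod (gE 2 3 j - gE 3 2 j))\<^sup>2 + (cmod (gE 3 1 j - gE 1 3 j))\<^sup>2 + (cmod (gE 1 2 j - gE 2 1 j))\<^sup>2)"
    unfolding ip_comp sum_2x3 m3_comp0 m3_comp1 curl_comp gE_def gH_def norm_minus_cancel
    by (simp add: sum.distrib)
  also have "\<dots> \<le> ?K * (\<Sum>j\<in>cell_box N. (cmod (v j $ (1,1)))\<^sup>2 + (cmod (v j $ (1,2)))\<^sup>2 + (cmod (v j $ (1,3)))\<^sup>2)
     + ?K * (\<Sum>j\<in>cell_box N. (cmod (v j $ (0,1)))\<^sup>2 + (cmod (v j $ (0,2)))\<^sup>2 + (cmod (v j $ (0,3)))\<^sup>2)"
    by (rule add_mono[OF bH bE])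
  also have "\<dots> = ?K * ip N v v"
    unfolding ip_comp sum_2x3 by (simp add: sum.distrib algebra_simps)
  finally show ?thesis .
qed

lemma periodic_per: "periodic N U = per N U"
  by (simp add: periodic_def per_def)

lemma l2norm_ip: "l2norm N U = sqrt ((\<Prod>m\<in>UNIV. mesh N m) * ip N U U)"
  by (simp add: l2norm_def ip_def power2_norm_eq_inner)

lemma stable_generic:
  fixes A :: "'d::finite \<Rightarrow> complex^'s::finite^'s"
  assumes herm: "\<forall>m. herm (A m)"
    and reg: "\<And>N dt. (N, dt) \<in> \<Lambda> \<Longrightarrow> (\<forall>m. 0 < N$m) \<and>
        (\<forall>v. per N v \<longrightarrow> ip N (dop A (\<lambda>m. dt / (2 * mesh N m)) v) (dop A (\<lambda>m. dt / (2 * mesh N m)) v) \<le> 3 * ip N v v)"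
  shows "l2_stable bfecc A \<Lambda>"
  unfolding l2_stable_def
proof (intro allI impI exI)
  fix T :: real and N dt n and U :: "('d,'s) gridfun"
  assume L: "(N, dt) \<in> \<Lambda>" and pU: "periodic N U"
  from reg[OF L] have N: "\<forall>m. 0 < N$m" and bnd: "\<And>v. per N v \<Longrightarrow> ip N (dop A (\<lambda>m. dt / (2 * mesh N m)) v) (dop A (\<lambda>m. dt / (2 * mesh N m)) v) \<le> 3 * ip N v v"
    by auto
  let ?B = "bfecc A dt (mesh N)"
  have step: "per N (?B X) \<and> ip N (?B X) (?B X) \<le> ip N X X" if "per N X" for X
    using energy[OF herm N that bnd] unfolding bfecc_dop Let_def by simp
  have it: "per N ((?B ^^ n) U) \<and> ip N ((?B ^^ n) U) ((?B ^^ n) U) \<le> ip N U U" for n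
  proof (induction n)
    case 0 then show ?case using pU by (simp add: periodic_per)
  next
    case (Suc n) then show ?case using step[of "(?B ^^ n) U"] by auto
  qed
  have "0 \<le> (\<Prod>m\<in>UNIV. mesh N m)" by (simp add: prod_nonneg mesh_def)
  then show "l2norm N ((?B ^^ n) U) \<le> 1 * l2norm N U"
    unfolding l2norm_ip using it[of n] by (simp add: mult_left_mono)
qed

lemma dt_sq: "0 < dt \<Longrightarrow> 0 < s \<Longrightarrow> dt \<le> sqrt 3 / sqrt s \<Longrightarrow> dt\<^sup>2 * s \<le> 3"
proof -
  assume a: "0 < dt" "0 < s" "dt \<le> sqrt 3 / sqrt s"
  then have "dt * sqrt s \<le> sqrt 3" by (simp add: pos_le_divide_eq)
  then have "(dt * sqrt s)\<^sup>2 \<le> (sqrt 3)\<^sup>2" using a by (intro power_mono) auto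
  then show ?thesis using a by (simp add: power_mult_distrib)
qed

lemma cfac: "4 * (dt / (2 * mesh N m))\<^sup>2 = dt\<^sup>2 * (1 / mesh N m)\<^sup>2"
  by (simp add: mesh_def power2_eq_square)

lemma stable1: "l2_stable bfecc maxwell1
           {(N, dt). (\<forall>m. 0 < N$m) \<and> 0 < dt \<and> dt \<le> sqrt 3 * mesh N 0}"
proof (rule stable_generic)
  show "\<forall>m. herm (maxwell1 m)" by (simp add: herm_def maxwell1_def)
next
  fix N :: "nat^1" and dt
  assume "(N, dt) \<in> {(N, dt). (\<forall>m. 0 < N$m) \<and> 0 < dt \<and> dt \<le> sqrt 3 * mesh N 0}"
  then have N: "\<forall>m. 0 < N$m" and dt: "0 < dt" "dt \<le> sqrt 3 * mesh N 0" by auto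
  have N0: "0 < N$0" using N by blast
  have "dt \<le> sqrt 3 / sqrt ((1 / mesh N 0)\<^sup>2)" using dt N0 by (simp add: mesh_def divide_simps)
  with N0 have k: "dt\<^sup>2 * (1 / mesh N 0)\<^sup>2 \<le> 3" using dt \<open>dt \<le> sqrt 3 / sqrt ((1 / mesh N 0)\<^sup>2)\<close> by (intro dt_sq) (auto simp: mesh_def)
  have e: "(1::1) = 0" by (simp add: num1_eq_iff)
  show "(\<forall>m. 0 < N$m) \<and> (\<forall>v. per N v \<longrightarrow> ip N (dop maxwell1 (\<lambda>m. dt / (2 * mesh N m)) v) (dop maxwell1 (\<lambda>m. dt / (2 * mesh N m)) v) \<le> 3 * ip N v v)"
  proof (rule conjI[OF N], intro allI impI)
    fix v :: "(1,2) gridfun" assume pv: "per N v"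
    have "ip N (dop maxwell1 (\<lambda>m. dt / (2 * mesh N m)) v) (dop maxwell1 (\<lambda>m. dt / (2 * mesh N m)) v)
       \<le> (dt\<^sup>2 * (1 / mesh N 0)\<^sup>2) * ip N v v"
      using m1_bound[OF pv N, of "\<lambda>m. dt / (2 * mesh N m)"] unfolding cfac e by simp
    also have "\<dots> \<le> 3 * ip N v v" by (rule mult_right_mono[OF k ip_nonneg])
    finally show "ip N (dop maxwell1 (\<lambda>m. dt / (2 * mesh N m)) v) (dop maxwell1 (\<lambda>m. dt / (2 * mesh N m)) v) \<le> 3 * ip N v v" .
  qed
qed

lemma stable2: "l2_stable bfecc maxwell2
           {(N, dt). (\<forall>m. 0 < N$m) \<and> 0 < dt \<and>
              dt \<le> sqrt 3 / sqrt ((1 / mesh N 0)\<^sup>2 + (1 / mesh N 1)\<^sup>2)}"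
proof (rule stable_generic)
  show "\<forall>m. herm (maxwell2 m)" by (simp add: herm_def maxwell2_def)
next
  fix N :: "nat^2" and dt
  assume "(N, dt) \<in> {(N, dt). (\<forall>m. 0 < N$m) \<and> 0 < dt \<and>
              dt \<le> sqrt 3 / sqrt ((1 / mesh N 0)\<^sup>2 + (1 / mesh N 1)\<^sup>2)}"
  then have N: "\<forall>m. 0 < N$m" and dt: "0 < dt" "dt \<le> sqrt 3 / sqrt ((1 / mesh N 0)\<^sup>2 + (1 / mesh N 1)\<^sup>2)" by auto
  have "0 < (1 / mesh N 0)\<^sup>2" using N by (simp add: mesh_def)
  then have k: "dt\<^sup>2 * ((1 / mesh N 0)\<^sup>2 + (1 / mesh N 1)\<^sup>2) \<le> 3"
    using dt by (intro dt_sq) (auto intro: add_pos_nonneg)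
  have e: "(2::2) = 0" by simp
  let ?c = "\<lambda>m. dt / (2 * mesh N m)"
  have ce: "4 * ((?c 1)\<^sup>2 + (?c 2)\<^sup>2) = dt\<^sup>2 * ((1 / mesh N 0)\<^sup>2 + (1 / mesh N 1)\<^sup>2)"
    unfolding distrib_left cfac e by (simp add: algebra_simps)
  show "(\<forall>m. 0 < N$m) \<and> (\<forall>v. per N v \<longrightarrow> ip N (dop maxwell2 ?c v) (dop maxwell2 ?c v) \<le> 3 * ip N v v)"
  proof (rule conjI[OF N], intro allI impI)
    fix v :: "(2,3) gridfun" assume pv: "per N v"
    have "ip N (dop maxwell2 ?c v) (dop maxwell2 ?c v) \<le> (dt\<^sup>2 * ((1 / mesh N 0)\<^sup>2 + (1 / mesh N 1)\<^sup>2)) * ip N v v"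
      using m2_bound[OF pv N, of ?c] unfolding ce[symmetric] by simp
    also have "\<dots> \<le> 3 * ip N v v" by (rule mult_right_mono[OF k ip_nonneg])
    finally show "ip N (dop maxwell2 ?c v) (dop maxwell2 ?c v) \<le> 3 * ip N v v" .
  qed
qed

lemma lc_anti: "levi_civita a m b = - levi_civita b m a"
  using exhaust_3[of a] exhaust_3[of b] exhaust_3[of m] by (elim disjE; simp add: levi_civita_def)

lemma lc_real: "cnj (levi_civita a m b) = levi_civita a m b"
  by (simp add: levi_civita_def)

lemma herm3: "herm (maxwell3 m)"
  unfolding herm_def
proof (intro allI)
  fix i j :: "2 \<times> 3"
  obtain p x where i: "i = (p, x)" by (cases i)
  obtain q y where j: "j = (q, y)" by (cases j)
  have "p = 1 \<or> p = 0" "q = 1 \<or> q = 0" using exhaust_2[of p] exhaust_2[of q] by auto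
  then show "cnj (maxwell3 m $ i $ j) = maxwell3 m $ j $ i"
    unfolding i j maxwell3_def using lc_anti[of x m y] lc_real[of x m y] by auto
qed

lemma stable3: "l2_stable bfecc maxwell3
           {(N, dt). (\<forall>m. 0 < N$m) \<and> 0 < dt \<and>
              dt \<le> sqrt 3 / sqrt ((1 / mesh N 0)\<^sup>2 + (1 / mesh N 1)\<^sup>2 + (1 / mesh N 2)\<^sup>2)}"
proof (rule stable_generic)
  show "\<forall>m. herm (maxwell3 m)" by (simp add: herm3)
next
  fix N :: "nat^3" and dt
  assume "(N, dt) \<in> {(N, dt). (\<forall>m. 0 < N$m) \<and> 0 < dt \<and>
              dt \<le> sqrt 3 / sqrt ((1 / mesh N 0)\<^sup>2 + (1 / mesh N 1)\<^sup>2 + (1 / mesh N 2)\<^sup>2)}"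
  then have N: "\<forall>m. 0 < N$m" and dt: "0 < dt" "dt \<le> sqrt 3 / sqrt ((1 / mesh N 0)\<^sup>2 + (1 / mesh N 1)\<^sup>2 + (1 / mesh N 2)\<^sup>2)" by auto
  have "0 < (1 / mesh N 0)\<^sup>2" using N by (simp add: mesh_def)
  then have "0 < (1 / mesh N 0)\<^sup>2 + (1 / mesh N 1)\<^sup>2 + (1 / mesh N 2)\<^sup>2"
    by (simp add: add_pos_nonneg)
  then have k: "dt\<^sup>2 * ((1 / mesh N 0)\<^sup>2 + (1 / mesh N 1)\<^sup>2 + (1 / mesh N 2)\<^sup>2) \<le> 3"
    using dt by (intro dt_sq) auto
  have e: "(3::3) = 0" by simp
  let ?c = "\<lambda>m. dt / (2 * mesh N m)"
  have ce: "4 * ((?c 1)\<^sup>2 + (?c 2)\<^sup>2 + (?c 3)\<^sup>2) = dt\<^sup>2 * ((1 / mesh N 0)\<^sup>2 + (1 / mesh N 1)\<^sup>2 + (1 / mesh N 2)\<^sup>2)"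
    unfolding distrib_left cfac e by (simp add: algebra_simps)
  show "(\<forall>m. 0 < N$m) \<and> (\<forall>v. per N v \<longrightarrow> ip N (dop maxwell3 ?c v) (dop maxwell3 ?c v) \<le> 3 * ip N v v)"
  proof (rule conjI[OF N], intro allI impI)
    fix v :: "(3,2\<times>3) gridfun" assume pv: "per N v"
    have "ip N (dop maxwell3 ?c v) (dop maxwell3 ?c v) \<le> (dt\<^sup>2 * ((1 / mesh N 0)\<^sup>2 + (1 / mesh N 1)\<^sup>2 + (1 / mesh N 2)\<^sup>2)) * ip N v v"
      using m3_bound[OF pv N, of ?c] unfolding ce[symmetric] by simp
    also have "\<dots> \<le> 3 * ip N v v" by (rule mult_right_mono[OF k ip_nonneg])
    finally show "ip N (dop maxwell3 ?c v) (dop maxwell3 ?c v) \<le> 3 * ip N v v" .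
  qed
qed

lemma cmv_norm: "norm ((M::complex^'n::finite^'m::finite) *v x) \<le> norm M * norm x"
proof -
  have row: "cmod ((M *v x)$i) \<le> norm (M$i) * norm x" for i
  proof -
    have "cmod ((M *v x)$i) = cmod (\<Sum>j\<in>UNIV. M$i$j * x$j)" by (simp add: matrix_vector_mult_def)
    also have "\<dots> \<le> (\<Sum>j\<in>UNIV. \<bar>cmod (M$i$j)\<bar> * \<bar>cmod (x$j)\<bar>)"
      by (rule order_trans[OF norm_sum]) (simp add: norm_mult)
    also have "\<dots> \<le> L2_set (\<lambda>j. cmod (M$i$j)) UNIV * L2_set (\<lambda>j. cmod (x$j)) UNIV"
      by (rule L2_set_mult_ineq)
    also have "\<dots> = norm (M$i) * norm x" by (simp add: norm_vec_def)
    finally show ?thesis .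
  qed
  have "norm (M *v x) = L2_set (\<lambda>i. cmod ((M *v x)$i)) UNIV" by (simp add: norm_vec_def)
  also have "\<dots> \<le> L2_set (\<lambda>i. norm (M$i) * norm x) UNIV"
    by (rule L2_set_mono) (simp_all add: row)
  also have "\<dots> = norm M * norm x"
    by (simp add: L2_set_left_distrib[symmetric] norm_vec_def)
  finally show ?thesis .
qed

lemma mat_norm_sq: "(norm (M::complex^'n::finite^'m::finite))\<^sup>2 = (\<Sum>i\<in>UNIV. \<Sum>j\<in>UNIV. (cmod (M$i$j))\<^sup>2)"
  by (simp add: norm_vec_def L2_set_def sum_nonneg)

lemma norm_transpose_c: "norm (transpose (M::complex^'n::finite^'m::finite)) = norm M"
proof -
  have "(norm (transpose M))\<^sup>2 = (norm M)\<^sup>2"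
    unfolding mat_norm_sq by (simp add: transpose_def) (rule sum.swap)
  then show ?thesis by (simp add: power2_eq_iff_nonneg)
qed

lemma cmm_norm: "norm ((M::complex^'n::finite^'m::finite) ** (N::complex^'k::finite^'n)) \<le> norm M * norm N"
proof -
  have r: "(M ** N)$i = transpose N *v (M$i)" for i
    by (simp add: vec_eq_iff matrix_matrix_mult_def matrix_vector_mult_def transpose_def mult.commute)
  have "norm (M ** N) = L2_set (\<lambda>i. norm ((M ** N)$i)) UNIV" by (simp add: norm_vec_def)
  also have "\<dots> \<le> L2_set (\<lambda>i. norm (M$i) * norm N) UNIV"
  proof (rule L2_set_mono)
    fix i
    have "norm ((M ** N)$i) \<le> norm (transpose N) * norm (M$i)" unfolding r by (rule cmv_norm)
    then show "norm ((M ** N)$i) \<le> norm (M$i) * norm N" by (simp add: norm_transpose_c mult.commute)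
  qed simp
  also have "\<dots> = norm M * norm N"
    by (simp add: L2_set_left_distrib[symmetric] norm_vec_def)
  finally show ?thesis .
qed

lemma mpow_Suc: "mpow M (Suc n) = M ** mpow M n"
  by (simp add: mpow_def)

lemma mpow_norm: "norm (mpow M n) \<le> norm (mat 1 :: complex^'s::finite^'s) * norm (M::complex^'s^'s) ^ n"
proof (induction n)
  case 0 then show ?case by (simp add: mpow_def)
next
  case (Suc n)
  have "norm (mpow M (Suc n)) \<le> norm M * norm (mpow M n)" unfolding mpow_Suc by (rule cmm_norm)
  also have "\<dots> \<le> norm M * (norm (mat 1 :: complex^'s^'s) * norm M ^ n)"
    by (rule mult_left_mono[OF Suc]) simp
  finally show ?case by (simp add: algebra_simps)
qed

lemma exp_real_series: "exp (x::real) = (\<Sum>n. inverse (fact n) * x ^ n)"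
  using sums_unique[OF exp_converges[of x]] by (simp add: divide_inverse mult.commute)

lemma mexp_tail:
  fixes M :: "complex^'s::finite^'s"
  shows "norm (mexp M - (mat 1 + M + (1/2) *\<^sub>R (M ** M))) \<le> norm (mat 1 :: complex^'s^'s) * norm M ^ 3 * exp (norm M)"
proof -
  define c where "c = norm (mat 1 :: complex^'s^'s)"
  define f where "f n = (1 / fact n) *\<^sub>R mpow M n" for n
  define g where "g n = c * norm M ^ 3 * (inverse (fact n) * norm M ^ n)" for n
  have fb: "norm (f n) \<le> c * (inverse (fact n) * norm M ^ n)" for n
  proof -
    have "norm (f n) = inverse (fact n) * norm (mpow M n)" unfolding f_def by (simp add: divide_inverse)
    also have "\<dots> \<le> inverse (fact n) * (c * norm M ^ n)"
      unfolding c_def by (rule mult_left_mono[OF mpow_norm]) simp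
    finally show ?thesis by (simp add: algebra_simps)
  qed
  have sg0: "summable (\<lambda>n. c * (inverse (fact n) * norm M ^ n))"
    by (intro summable_mult summable_exp)
  have sf: "summable f"
    by (rule summable_comparison_test'[OF sg0 fb])
  have sg: "summable g" unfolding g_def by (intro summable_mult summable_exp)
  have init: "(\<Sum>i<3. f i) = mat 1 + M + (1/2) *\<^sub>R (M ** M)"
  proof -
    have m0: "mpow M 0 = mat 1" by (simp add: mpow_def)
    have m1: "mpow M (Suc 0) = M" using mpow_Suc[of M 0] by (simp add: m0 matrix_mul_rid)
    have m2: "mpow M 2 = M ** M" using mpow_Suc[of M "Suc 0"] by (simp add: m1 numeral_2_eq_2)
    have "(\<Sum>i<3. f i) = f 0 + f 1 + f 2" by (simp add: numeral_3_eq_3 lessThan_Suc numeral_2_eq_2 add.commute add.left_commute)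
    then show ?thesis by (simp add: f_def m0 m1 m2)
  qed
  have split: "mexp M = (\<Sum>n. f (n + 3)) + (\<Sum>i<3. f i)"
    unfolding mexp_def f_def[symmetric] by (rule suminf_split_initial_segment[OF sf])
  have tb: "norm (f (n + 3)) \<le> g n" for n
  proof -
    have "norm (f (n + 3)) \<le> c * (inverse (fact (n + 3)) * norm M ^ (n + 3))" by (rule fb)
    also have "\<dots> \<le> c * (inverse (fact n) * norm M ^ (n + 3))"
      unfolding c_def
      by (intro mult_left_mono mult_right_mono le_imp_inverse_le) (auto intro: fact_mono)
    also have "\<dots> = g n" by (simp add: g_def power_add algebra_simps)
    finally show ?thesis .
  qed
  have "norm (mexp M - (mat 1 + M + (1/2) *\<^sub>R (M ** M))) = norm (\<Sum>n. f (n + 3))"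
    unfolding split init by simp
  also have "\<dots> \<le> suminf g" by (rule norm_suminf_le[OF tb sg])
  also have "\<dots> = c * norm M ^ 3 * exp (norm M)"
    unfolding g_def exp_real_series by (rule suminf_mult[OF summable_exp])
  finally show ?thesis unfolding c_def .
qed

definition ee :: "real \<Rightarrow> real^'d::finite \<Rightarrow> int^'d \<Rightarrow> complex" where
  "ee h k j = exp (2 * pi * \<i> * of_real (\<Sum>m\<in>UNIV. k$m * h * of_int (j$m)))"

definition th :: "real \<Rightarrow> real^'d::finite \<Rightarrow> 'd \<Rightarrow> real" where
  "th h k m = 2 * pi * k$m * h"

lemma exp_i_diff: "exp (\<i> * of_real t) - exp (- (\<i> * of_real t)) = 2 * \<i> * of_real (sin t)"
proof -
  have "exp (\<i> * of_real t) = cis t" by (simp add: cis_conv_exp)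
  moreover have "exp (- (\<i> * of_real t)) = cis (- t)" by (simp add: cis_conv_exp)
  ultimately show ?thesis by (simp add: complex_eq_iff)
qed

lemma ee_shift:
  "ee h k (j + axis m 1) = ee h k j * exp (\<i> * of_real (th h k m))"
  "ee h k (j - axis m 1) = ee h k j * exp (- (\<i> * of_real (th h k m)))"
proof -
  have hd: "(\<Sum>m'\<in>UNIV. h * (k $ m' * (if m' = m then 1 else 0))) = h * k $ m"
    by (subst sum.cong[OF refl, of _ _ "\<lambda>m'. if m' = m then h * k$m else 0"]) auto
  have s1: "(\<Sum>m'\<in>UNIV. k$m' * h * of_int ((j + axis m 1)$m')) = (\<Sum>m'\<in>UNIV. k$m' * h * of_int (j$m')) + k$m * h"
    using hd by (simp add: axis_def algebra_simps sum.distrib if_distrib[of real_of_int] cong: if_cong)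
  have s2: "(\<Sum>m'\<in>UNIV. k$m' * h * of_int ((j - axis m 1)$m')) = (\<Sum>m'\<in>UNIV. k$m' * h * of_int (j$m')) - k$m * h"
    using hd by (simp add: axis_def algebra_simps sum_subtractf if_distrib[of real_of_int] cong: if_cong)
  show "ee h k (j + axis m 1) = ee h k j * exp (\<i> * of_real (th h k m))"
    unfolding ee_def s1 th_def by (simp add: exp_add[symmetric] algebra_simps)
  show "ee h k (j - axis m 1) = ee h k j * exp (- (\<i> * of_real (th h k m)))"
    unfolding ee_def s2 th_def by (simp add: exp_add[symmetric] exp_diff algebra_simps)
qed

definition Sm :: "('d::finite \<Rightarrow> complex^'s::finite^'s) \<Rightarrow> real \<Rightarrow> real \<Rightarrow> real^'d \<Rightarrow> complex^'s^'s" where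
  "Sm A \<nu> h k = (\<Sum>m\<in>UNIV. (\<nu> * sin (th h k m)) *\<^sub>R A m)"

lemma cvs_mv: "(A::complex^'n::finite^'m::finite) *v cvec_scale c w = cvec_scale c (A *v w)"
  by (simp add: vec_eq_iff cvec_scale_def matrix_vector_mult_def sum_distrib_left algebra_simps)

lemma sum_mv: "finite S \<Longrightarrow> (\<Sum>m\<in>S. F m) *v (w::complex^'n::finite) = (\<Sum>m\<in>S. F m *v w)"
  by (induction S rule: finite_induct) (simp_all add: matrix_vector_mult_add_rdistrib)

lemma scaleR_mv: "(r *\<^sub>R (M::complex^'n::finite^'m::finite)) *v w = r *\<^sub>R (M *v w)"
  by (simp add: vec_eq_iff matrix_vector_mult_def scaleR_sum_right)

lemma central_wave:
  assumes "h \<noteq> 0"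
  shows "central A (\<nu> * h) (\<lambda>m. h) (\<lambda>j. cvec_scale (ee h k j) w) j
       = cvec_scale (ee h k j) (w + cvec_scale \<i> (Sm A \<nu> h k *v w))"
proof -
  have d: "cvec_scale (ee h k (j + axis m 1)) w - cvec_scale (ee h k (j - axis m 1)) w
      = cvec_scale (ee h k j * (2 * \<i> * of_real (sin (th h k m)))) w" for m
  proof -
    have "ee h k (j + axis m 1) - ee h k (j - axis m 1) = ee h k j * (2 * \<i> * of_real (sin (th h k m)))"
      unfolding ee_shift exp_i_diff[symmetric] by (simp add: algebra_simps)
    then show ?thesis by (simp add: vec_eq_iff cvec_scale_def left_diff_distrib[symmetric])
  qed
  have "central A (\<nu> * h) (\<lambda>m. h) (\<lambda>j. cvec_scale (ee h k j) w) j
     = cvec_scale (ee h k j) w + (\<Sum>m\<in>UNIV. (\<nu> / 2) *\<^sub>R cvec_scale (ee h k j * (2 * \<i> * of_real (sin (th h k m)))) (A m *v w))"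
    unfolding central_def using assms by (simp add: d cvs_mv)
  also have "\<dots> = cvec_scale (ee h k j) (w + cvec_scale \<i> (Sm A \<nu> h k *v w))"
    unfolding Sm_def sum_mv[OF finite] scaleR_mv
    by (simp add: vec_eq_iff cvec_scale_def sum_component vector_scaleR_component del: scaleR_conv_of_real)
       (simp add: scaleR_conv_of_real sum_distrib_left algebra_simps)
  finally show ?thesis .
qed

lemma plane_wave_ee: "plane_wave h k v = (\<lambda>j. cvec_scale (ee h k j) v)"
  by (simp add: plane_wave_def ee_def)

lemma ee_0: "ee h k 0 = 1"
  by (simp add: ee_def)

lemma cvec_scale_1: "cvec_scale 1 x = x"
  by (simp add: cvec_scale_def vec_eq_iff)

lemma Sm_neg: "Sm (\<lambda>m. - A m) \<nu> h k = - Sm A \<nu> h k"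
  by (simp add: Sm_def sum_negf)

lemma cmv_uminus: "(M::complex^'n::finite^'m::finite) *v (- x) = - (M *v x)"
  by (simp add: vec_eq_iff matrix_vector_mult_def sum_negf)

lemma bfecc_wave:
  fixes A :: "'d::finite \<Rightarrow> complex^'s::finite^'s" and \<nu> h :: real and k :: "real^'d"
  assumes h: "h \<noteq> 0"
  defines "S \<equiv> Sm A \<nu> h k"
  shows "bfecc A (\<nu> * h) (\<lambda>m. h) (plane_wave h k v) 0
     = v + cvec_scale \<i> (S *v v) - (1/2) *\<^sub>R (S *v (S *v v)) - (1/2) *\<^sub>R cvec_scale \<i> (S *v (S *v (S *v v)))"
proof -
  define w1 where "w1 = v + cvec_scale \<i> (S *v v)"
  define w0 where "w0 = w1 + cvec_scale \<i> (Sm (\<lambda>m. - A m) \<nu> h k *v w1)"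
  define w2 where "w2 = v + (1/2) *\<^sub>R (v - w0)"
  have c1: "central A (\<nu> * h) (\<lambda>m. h) (plane_wave h k v) = (\<lambda>j. cvec_scale (ee h k j) w1)"
    unfolding plane_wave_ee w1_def S_def by (rule ext, rule central_wave[OF h])
  have c2: "central_backward A (\<nu> * h) (\<lambda>m. h) (\<lambda>j. cvec_scale (ee h k j) w1) = (\<lambda>j. cvec_scale (ee h k j) w0)"
    unfolding central_backward_def w0_def by (rule ext, rule central_wave[OF h])
  have c3: "(\<lambda>j. plane_wave h k v j + (1/2) *\<^sub>R (plane_wave h k v j - cvec_scale (ee h k j) w0)) = (\<lambda>j. cvec_scale (ee h k j) w2)"
    unfolding plane_wave_ee w2_def
    by (rule ext) (simp add: vec_eq_iff cvec_scale_def vector_scaleR_component del: scaleR_conv_of_real; simp add: scaleR_conv_of_real algebra_simps)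
  have "bfecc A (\<nu> * h) (\<lambda>m. h) (plane_wave h k v) 0 = w2 + cvec_scale \<i> (S *v w2)"
    unfolding bfecc_def Let_def c1 c2 c3 central_wave[OF h] ee_0 cvec_scale_1 S_def ..
  also have "\<dots> = v + cvec_scale \<i> (S *v v) - (1/2) *\<^sub>R (S *v (S *v v)) - (1/2) *\<^sub>R cvec_scale \<i> (S *v (S *v (S *v v)))"
    unfolding w2_def w0_def w1_def Sm_neg S_def[symmetric] cmv_neg
    by (simp add: matrix_vector_right_distrib matrix_vector_mult_diff_distrib cvs_mv cmv_scaleR cmv_uminus)
       (simp add: vec_eq_iff cvec_scale_def vector_scaleR_component del: scaleR_conv_of_real; simp add: scaleR_conv_of_real algebra_simps)
  finally show ?thesis .
qed

lemma norm_cvec_scale: "norm (cvec_scale c (x::complex^'n::finite)) = cmod c * norm x"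
  unfolding norm_vec_def[of "cvec_scale c x"] norm_vec_def[of x]
  by (simp add: cvec_scale_def norm_mult L2_set_right_distrib)

lemma cmat_row: "(cmat_scale c X)$a = cvec_scale c (X$a)"
  by (simp add: cmat_scale_def cvec_scale_def vec_eq_iff)

lemma norm_cmat_scale: "norm (cmat_scale c (X::complex^'n::finite^'n)) = cmod c * norm X"
proof -
  have "norm (cmat_scale c X) = L2_set (\<lambda>a. norm (cmat_scale c X $ a)) UNIV" by (rule norm_vec_def)
  also have "\<dots> = L2_set (\<lambda>a. cmod c * norm (X$a)) UNIV" by (simp add: cmat_row norm_cvec_scale)
  also have "\<dots> = cmod c * norm X" by (simp add: L2_set_right_distrib norm_vec_def[of X])
  finally show ?thesis .
qed

lemma cmat_mv: "cmat_scale c X *v u = cvec_scale c (X *v u)"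
  by (simp add: cmat_scale_def cvec_scale_def vec_eq_iff matrix_vector_mult_def sum_distrib_left algebra_simps)

definition Tm :: "('d::finite \<Rightarrow> complex^'s::finite^'s) \<Rightarrow> real \<Rightarrow> real \<Rightarrow> real^'d \<Rightarrow> complex^'s^'s" where
  "Tm A \<nu> h k = (\<Sum>m\<in>UNIV. (\<nu> * th h k m) *\<^sub>R A m)"

lemma M_eq: "cmat_scale (of_real (\<nu> * h)) (exact_symbol A k) = cmat_scale \<i> (Tm A \<nu> h k)"
  by (simp add: vec_eq_iff cmat_scale_def exact_symbol_def Tm_def th_def sum_component vector_scaleR_component del: scaleR_conv_of_real)
     (simp add: scaleR_conv_of_real sum_distrib_left algebra_simps)

lemma th_bound: "\<bar>th h k m\<bar> \<le> 2 * pi * norm (h *\<^sub>R k)"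
proof -
  have "\<bar>(h *\<^sub>R k)$m\<bar> \<le> norm (h *\<^sub>R k)" by (rule component_le_norm_cart)
  then show ?thesis by (simp add: th_def abs_mult mult.commute)
qed

lemma sin_cubic: "\<bar>sin (x::real) - x\<bar> \<le> \<bar>x\<bar>^3 / 6"
proof -
  have "(\<Sum>m<Suc (Suc (Suc 0)). sin_coeff m * x ^ m) = x"
    by (simp add: sin_coeff_def)
  moreover have "(fact (Suc (Suc (Suc 0))) :: real) = 6" by (simp add: fact_Suc)
  ultimately have "\<bar>sin x - x\<bar> \<le> inverse 6 * \<bar>x\<bar> ^ 3"
    using Maclaurin_sin_bound[of x "Suc (Suc (Suc 0))"] by (simp add: numeral_3_eq_3)
  moreover have "inverse 6 * \<bar>x\<bar> ^ 3 = \<bar>x\<bar> ^ 3 / 6" by simp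
  ultimately show ?thesis by linarith
qed

lemma norm_sumR:
  fixes A :: "'d::finite \<Rightarrow> complex^'s::finite^'s"
  assumes "\<And>m. \<bar>r m\<bar> \<le> b"
  shows "norm (\<Sum>m\<in>UNIV. r m *\<^sub>R A m) \<le> b * (\<Sum>m\<in>UNIV. norm (A m))"
proof -
  have "norm (\<Sum>m\<in>UNIV. r m *\<^sub>R A m) \<le> (\<Sum>m\<in>UNIV. \<bar>r m\<bar> * norm (A m))"
    by (rule order_trans[OF norm_sum]) simp
  also have "\<dots> \<le> (\<Sum>m\<in>UNIV. b * norm (A m))"
    by (intro sum_mono mult_right_mono assms) simp
  finally show ?thesis by (simp add: sum_distrib_left)
qed

lemma cvs_ii: "cvec_scale \<i> (cvec_scale \<i> y) = - y"
  by (simp add: cvec_scale_def vec_eq_iff)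

lemma cvs_minus: "cvec_scale c (x - y) = cvec_scale c x - cvec_scale c y"
  by (simp add: cvec_scale_def vec_eq_iff algebra_simps)

lemma cvs_scaleR: "cvec_scale c (r *\<^sub>R x) = r *\<^sub>R cvec_scale c x"
  by (simp add: cvec_scale_def vec_eq_iff vector_scaleR_component del: scaleR_conv_of_real)

lemma accurate_generic:
  fixes A :: "'d::finite \<Rightarrow> complex^'s::finite^'s"
  shows "fourier_accurate 2 bfecc A"
  unfolding fourier_accurate_def
proof (intro allI impI)
  fix \<nu> :: real assume \<nu>: "0 < \<nu>"
  define K where "K = (\<Sum>m\<in>UNIV. norm (A m))"
  define a where "a = 2 * pi * \<nu> * K"
  define B where "B = \<nu> * (2 * pi)^3 / 6 * K"
  define c0 where "c0 = norm (mat 1 :: complex^'s^'s)"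
  define C where "C = c0 * a^3 * exp a + B + a * B + a^3 / 2"
  have K0: "0 \<le> K" unfolding K_def by (simp add: sum_nonneg)
  have a0: "0 \<le> a" unfolding a_def using \<nu> K0 by simp
  have B0: "0 \<le> B" unfolding B_def using \<nu> K0 by simp
  have c00: "0 \<le> c0" unfolding c0_def by simp
  show "\<exists>C \<delta>. 0 < \<delta> \<and> (\<forall>h k v. 0 < h \<longrightarrow> norm (h *\<^sub>R k) \<le> \<delta> \<longrightarrow>
           norm (bfecc A (\<nu> * h) (\<lambda>m. h) (plane_wave h k v) 0
                 - mexp (cmat_scale (of_real (\<nu> * h)) (exact_symbol A k)) *v v)
             \<le> C * norm (h *\<^sub>R k) ^ (2 + 1) * norm v)"
  proof (intro exI conjI allI impI)
    show "(0::real) < 1" by simp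
    fix h :: real and k :: "real^'d" and v :: "complex^'s"
    assume h: "0 < h" and rho1: "norm (h *\<^sub>R k) \<le> 1"
    define \<rho> where "\<rho> = norm (h *\<^sub>R k)"
    have r0: "0 \<le> \<rho>" and r1: "\<rho> \<le> 1" using rho1 by (simp_all add: \<rho>_def)
    define S where "S = Sm A \<nu> h k"
    define T where "T = Tm A \<nu> h k"
    define M where "M = cmat_scale (of_real (\<nu> * h)) (exact_symbol A k)"
    have thb: "\<bar>th h k m\<bar> \<le> 2 * pi * \<rho>" for m unfolding \<rho>_def by (rule th_bound)
    have hS: "norm S \<le> a * \<rho>"
    proof -
      have "norm S \<le> (\<nu> * (2 * pi * \<rho>)) * K" unfolding S_def Sm_def K_def
      proof (rule norm_sumR)
        fix m
        have "\<bar>sin (th h k m)\<bar> \<le> 2 * pi * \<rho>" using abs_sin_x_le_abs_x[of "th h k m"] thb[of m] by linarith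
        then show "\<bar>\<nu> * sin (th h k m)\<bar> \<le> \<nu> * (2 * pi * \<rho>)" using \<nu> by (simp add: abs_mult)
      qed
      then show ?thesis unfolding a_def by (simp add: algebra_simps)
    qed
    have hT: "norm T \<le> a * \<rho>"
    proof -
      have "norm T \<le> (\<nu> * (2 * pi * \<rho>)) * K" unfolding T_def Tm_def K_def
      proof (rule norm_sumR)
        fix m
        show "\<bar>\<nu> * th h k m\<bar> \<le> \<nu> * (2 * pi * \<rho>)" using \<nu> thb[of m] by (simp add: abs_mult)
      qed
      then show ?thesis unfolding a_def by (simp add: algebra_simps)
    qed
    have hST: "norm (S - T) \<le> B * \<rho>^3"
    proof -
      have "S - T = (\<Sum>m\<in>UNIV. (\<nu> * (sin (th h k m) - th h k m)) *\<^sub>R A m)"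
        unfolding S_def T_def Sm_def Tm_def by (simp add: sum_subtractf[symmetric] scaleR_diff_left algebra_simps)
      also have "norm \<dots> \<le> (\<nu> * ((2 * pi * \<rho>)^3 / 6)) * K" unfolding K_def
      proof (rule norm_sumR)
        fix m
        have "\<bar>th h k m\<bar>^3 \<le> (2 * pi * \<rho>)^3" by (rule power_mono[OF thb]) simp
        then have "\<bar>sin (th h k m) - th h k m\<bar> \<le> (2 * pi * \<rho>)^3 / 6" using sin_cubic[of "th h k m"] by linarith
        then show "\<bar>\<nu> * (sin (th h k m) - th h k m)\<bar> \<le> \<nu> * ((2 * pi * \<rho>)^3 / 6)" using \<nu> by (simp add: abs_mult)
      qed
      finally show ?thesis unfolding B_def by (simp add: power_mult_distrib algebra_simps)
    qed
    have MT: "M = cmat_scale \<i> T" unfolding M_def T_def by (rule M_eq)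
    have hM: "norm M \<le> a * \<rho>" using hT unfolding MT norm_cmat_scale by simp
    have Mv: "M *v u = cvec_scale \<i> (T *v u)" for u unfolding MT by (rule cmat_mv)
    define P where "P = mat 1 + M + (1/2) *\<^sub>R (M ** M)"
    have Pv: "P *v v = v + cvec_scale \<i> (T *v v) - (1/2) *\<^sub>R (T *v (T *v v))"
      unfolding P_def matrix_vector_mult_add_rdistrib scaleR_mv matrix_vector_mul_assoc[symmetric] Mv cvs_mv cvs_ii
      by simp
    have R: "bfecc A (\<nu> * h) (\<lambda>m. h) (plane_wave h k v) 0
       = v + cvec_scale \<i> (S *v v) - (1/2) *\<^sub>R (S *v (S *v v)) - (1/2) *\<^sub>R cvec_scale \<i> (S *v (S *v (S *v v)))"
      unfolding S_def by (rule bfecc_wave) (use h in simp)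
    have decomp: "bfecc A (\<nu> * h) (\<lambda>m. h) (plane_wave h k v) 0 - mexp M *v v
      = (P - mexp M) *v v + cvec_scale \<i> ((S - T) *v v)
        - (1/2) *\<^sub>R (S *v ((S - T) *v v) + (S - T) *v (T *v v))
        - (1/2) *\<^sub>R cvec_scale \<i> (S *v (S *v (S *v v)))"
      unfolding R matrix_vector_mult_diff_rdistrib Pv matrix_vector_mult_diff_distrib cvs_minus
      by (simp add: algebra_simps)
    have n1: "norm ((P - mexp M) *v v) \<le> c0 * a^3 * exp a * \<rho>^3 * norm v"
    proof -
      have "norm ((P - mexp M) *v v) \<le> norm (mexp M - P) * norm v"
        using cmv_norm[of "P - mexp M" v] by (simp add: norm_minus_commute)
      also have "\<dots> \<le> (c0 * norm M ^ 3 * exp (norm M)) * norm v"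
        unfolding P_def c0_def by (rule mult_right_mono[OF mexp_tail]) simp
      also have "\<dots> \<le> (c0 * (a * \<rho>) ^ 3 * exp a) * norm v"
      proof -
        have "norm M ^ 3 \<le> (a * \<rho>) ^ 3" by (rule power_mono[OF hM]) simp
        moreover have "exp (norm M) \<le> exp a" using hM r1 a0 mult_left_le[of \<rho> a] by simp
        ultimately show ?thesis using c00 a0 r0 by (intro mult_right_mono mult_mono mult_left_mono) simp_all
      qed
      finally show ?thesis by (simp add: power_mult_distrib algebra_simps)
    qed
    have n2: "norm (cvec_scale \<i> ((S - T) *v v)) \<le> B * \<rho>^3 * norm v"
      unfolding norm_cvec_scale using order_trans[OF cmv_norm mult_right_mono[OF hST norm_ge_zero]] by simp
    have n3: "norm ((1/2) *\<^sub>R (S *v ((S - T) *v v) + (S - T) *v (T *v v))) \<le> a * B * \<rho>^3 * norm v"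
    proof -
      have "norm (S *v ((S - T) *v v)) \<le> norm S * (norm (S - T) * norm v)"
        by (rule order_trans[OF cmv_norm mult_left_mono[OF cmv_norm norm_ge_zero]])
      also have "\<dots> \<le> (a * \<rho>) * ((B * \<rho>^3) * norm v)"
        by (intro mult_mono hS hST order_refl mult_nonneg_nonneg) (simp_all add: B0 r0 a0)
      finally have x1: "norm (S *v ((S - T) *v v)) \<le> (a * \<rho>) * ((B * \<rho>^3) * norm v)" .
      have "norm ((S - T) *v (T *v v)) \<le> norm (S - T) * (norm T * norm v)"
        by (rule order_trans[OF cmv_norm mult_left_mono[OF cmv_norm norm_ge_zero]])
      also have "\<dots> \<le> (B * \<rho>^3) * ((a * \<rho>) * norm v)"
        by (intro mult_mono hT hST order_refl mult_nonneg_nonneg) (simp_all add: B0 r0 a0)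
      finally have x2: "norm ((S - T) *v (T *v v)) \<le> (B * \<rho>^3) * ((a * \<rho>) * norm v)" .
      have "norm ((1/2) *\<^sub>R (S *v ((S - T) *v v) + (S - T) *v (T *v v)))
          \<le> (1/2) * (norm (S *v ((S - T) *v v)) + norm ((S - T) *v (T *v v)))"
        by (simp add: norm_triangle_ineq)
      also have "\<dots> \<le> a * B * \<rho>^3 * \<rho> * norm v" using x1 x2 by (simp add: algebra_simps)
      also have "\<dots> \<le> a * B * \<rho>^3 * 1 * norm v"
        by (intro mult_right_mono mult_left_mono r1) (simp_all add: a0 B0 r0)
      finally show ?thesis by simp
    qed
    have n4: "norm ((1/2) *\<^sub>R cvec_scale \<i> (S *v (S *v (S *v v)))) \<le> a^3 / 2 * \<rho>^3 * norm v"
    proof -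
      have "norm (S *v (S *v (S *v v))) \<le> norm S * (norm S * (norm S * norm v))"
        by (rule order_trans[OF cmv_norm mult_left_mono[OF order_trans[OF cmv_norm mult_left_mono[OF cmv_norm norm_ge_zero]] norm_ge_zero]])
      also have "\<dots> \<le> (a * \<rho>) * ((a * \<rho>) * ((a * \<rho>) * norm v))"
        by (intro mult_mono hS order_refl mult_nonneg_nonneg) (simp_all add: r0 a0)
      finally show ?thesis by (simp add: norm_cvec_scale power3_eq_cube algebra_simps)
    qed
    have "norm (bfecc A (\<nu> * h) (\<lambda>m. h) (plane_wave h k v) 0 - mexp M *v v)
       \<le> norm ((P - mexp M) *v v) + norm (cvec_scale \<i> ((S - T) *v v))
         + norm ((1/2) *\<^sub>R (S *v ((S - T) *v v) + (S - T) *v (T *v v)))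
         + norm ((1/2) *\<^sub>R cvec_scale \<i> (S *v (S *v (S *v v))))"
      unfolding decomp by (intro norm_triangle_le_diff norm_triangle_le add_mono order_refl)
    also have "\<dots> \<le> C * \<rho>^3 * norm v"
      using n1 n2 n3 n4 unfolding C_def by (simp add: algebra_simps)
    finally show "norm (bfecc A (\<nu> * h) (\<lambda>m. h) (plane_wave h k v) 0
                 - mexp (cmat_scale (of_real (\<nu> * h)) (exact_symbol A k)) *v v)
             \<le> C * norm (h *\<^sub>R k) ^ (2 + 1) * norm v" unfolding M_def \<rho>_def by simp
  qed
qed

theorem theorem3p1:
  shows "fourier_accurate 2 bfecc maxwell1 \<and>
         fourier_accurate 2 bfecc maxwell2 \<and>
         fourier_accurate 2 bfecc maxwell3 \<and>
         l2_stable bfecc maxwell1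
           {(N, dt). (\<forall>m. 0 < N$m) \<and> 0 < dt \<and> dt \<le> sqrt 3 * mesh N 0} \<and>
         l2_stable bfecc maxwell2
           {(N, dt). (\<forall>m. 0 < N$m) \<and> 0 < dt \<and>
              dt \<le> sqrt 3 / sqrt ((1 / mesh N 0)\<^sup>2 + (1 / mesh N 1)\<^sup>2)} \<and>
         l2_stable bfecc maxwell3
           {(N, dt). (\<forall>m. 0 < N$m) \<and> 0 < dt \<and>
              dt \<le> sqrt 3 / sqrt ((1 / mesh N 0)\<^sup>2 + (1 / mesh N 1)\<^sup>2 + (1 / mesh N 2)\<^sup>2)}"
  using accurate_generic[of maxwell1] accurate_generic[of maxwell2] accurate_generic[of maxwell3]
    stable1 stable2 stable3 by blast

end
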